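(* Let $\mathcal{L}=(n,\mathcal{M},\mathcal{C})$ be a simple linearization. The following are equivalent: (i) $P(\mathcal{L})$ is integral; (ii) $G(D(\mathcal{L}))$ is acyclic; (iii) the system $0\le y_m\le1$ ($m\in\mathcal{M}$), $y_{\bigcup c}\le y_m$ ($c\in\mathcal{C}$, $m\in c$), $\sum_{m\in c}y_m\le y_{\bigcup c}+|c|-1$ ($c\in\mathcal{C}$) is totally dual integral.
   Context: $[n]=\{1,\dots,n\}$; a monomial is a nonempty subset of $[n]$; $\mathcal{S}=\{\{i\}:i\in[n]\}$. A linearization is a triple $\mathcal{L}=(n,\mathcal{M},\mathcal{C})$, where $\mathcal{M}$ is a set of monomials with $\mathcal{S}\subseteq\mathcal{M}$ and $\mathcal{C}$ is a set of AND-constraints; each AND-constraint is a set $c\subseteq\mathcal{M}$ whose union $\bigcup c$ (resultant) lies in $\mathcal{M}$. $\mathcal{P}=\mathcal{M}\setminus\mathcal{S}$. Linearizations are consistent: each $m\in\mathcal{P}$ is the resultant of some $c$ with $|m'|<|m|$ for all $m'\in c$. $\mathcal{L}$ is simple if each proper monomial is the resultant of exactly one AND-constraint and $|\mathcal{C}|=|\mathcal{P}|$. $P(\mathcal{L})\subseteq\mathbb{R}^{\mathcal{M}}$ is the polytope defined by the system in (iii). $D(\mathcal{L})$ has node set $\mathcal{M}$ and, for each $c\in\mathcal{C}$, arcs from $\bigcup c$ to each $m\in c$; $G(D(\mathcal{L}))$ is its underlying undirected graph. Total dual integrality: for every integral objective with finite LP maximum, the dual has an integral optimal solution. *)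

theory Defs
  imports Complex_Main
begin

type_synonym monomial = "nat set"
type_synonym andc = "nat set set"

definition linearization :: "nat \<Rightarrow> monomial set \<Rightarrow> andc set \<Rightarrow> bool" where
  "linearization n M C \<longleftrightarrow>
     (\<forall>m\<in>M. m \<noteq> {} \<and> m \<subseteq> {1..n}) \<and>
     (\<forall>i\<in>{1..n}. {i} \<in> M) \<and>
     (\<forall>c\<in>C. c \<subseteq> M \<and> \<Union>c \<in> M) \<and>
     (\<forall>m\<in>M - {{i} | i. i \<in> {1..n}}.
        \<exists>c\<in>C. \<Union>c = m \<and> (\<forall>m'\<in>c. card m' < card m))"

definition proper_monomials :: "nat \<Rightarrow> monomial set \<Rightarrow> monomial set" where
  "proper_monomials n M = M - {{i} | i. i \<in> {1..n}}"

definition simple_linearization :: "nat \<Rightarrow> monomial set \<Rightarrow> andc set \<Rightarrow> bool" where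
  "simple_linearization n M C \<longleftrightarrow> linearization n M C \<and>
     (\<forall>m\<in>proper_monomials n M. \<exists>!c. c \<in> C \<and> \<Union>c = m) \<and>
     card C = card (proper_monomials n M)"

text \<open>Row indices of the linear system describing P(L).\<close>
datatype row = Lo monomial | Up monomial | Ord andc monomial | Sm andc

definition rows :: "monomial set \<Rightarrow> andc set \<Rightarrow> row set" where
  "rows M C = Lo ` M \<union> Up ` M \<union> {Ord c m | c m. c \<in> C \<and> m \<in> c} \<union> Sm ` C"

definition ind :: "bool \<Rightarrow> real" where "ind b = (if b then 1 else 0)"

text \<open>Coefficient of variable m' in row r (system written as A y \<le> b).\<close>
fun coef :: "row \<Rightarrow> monomial \<Rightarrow> real" where
  "coef (Lo m) m' = - ind (m' = m)"
| "coef (Up m) m' = ind (m' = m)"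
| "coef (Ord c m) m' = ind (m' = \<Union>c) - ind (m' = m)"
| "coef (Sm c) m' = ind (m' \<in> c) - ind (m' = \<Union>c)"

fun rhs :: "row \<Rightarrow> real" where
  "rhs (Lo m) = 0"
| "rhs (Up m) = 1"
| "rhs (Ord c m) = 0"
| "rhs (Sm c) = real (card c) - 1"

text \<open>Vectors in R^M are functions vanishing outside M.\<close>
definition PL :: "monomial set \<Rightarrow> andc set \<Rightarrow> (monomial \<Rightarrow> real) set" where
  "PL M C = {y. (\<forall>m. m \<notin> M \<longrightarrow> y m = 0) \<and>
                (\<forall>r\<in>rows M C. (\<Sum>m\<in>M. coef r m * y m) \<le> rhs r)}"

definition vertex :: "(monomial \<Rightarrow> real) set \<Rightarrow> (monomial \<Rightarrow> real) \<Rightarrow> bool" where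
  "vertex P y \<longleftrightarrow> y \<in> P \<and>
     (\<forall>a\<in>P. \<forall>b\<in>P. \<forall>t::real. 0 < t \<and> t < 1 \<and> y = (\<lambda>m. t * a m + (1 - t) * b m) \<longrightarrow> a = b)"

definition integral_polytope :: "monomial set \<Rightarrow> (monomial \<Rightarrow> real) set \<Rightarrow> bool" where
  "integral_polytope M P \<longleftrightarrow> (\<forall>y. vertex P y \<longrightarrow> (\<forall>m\<in>M. y m \<in> \<int>))"

definition TDI :: "monomial set \<Rightarrow> 'r set \<Rightarrow> ('r \<Rightarrow> monomial \<Rightarrow> real) \<Rightarrow> ('r \<Rightarrow> real) \<Rightarrow> bool" where
  "TDI M R A b \<longleftrightarrow>
    (\<forall>w :: monomial \<Rightarrow> real. (\<forall>m\<in>M. w m \<in> \<int>) \<longrightarrow>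
      (let P = {y. (\<forall>m. m \<notin> M \<longrightarrow> y m = 0) \<and> (\<forall>r\<in>R. (\<Sum>m\<in>M. A r m * y m) \<le> b r)};
           D = {lam. (\<forall>r. r \<notin> R \<longrightarrow> lam r = 0) \<and> (\<forall>r\<in>R. 0 \<le> lam r) \<and>
                    (\<forall>m\<in>M. (\<Sum>r\<in>R. lam r * A r m) = w m)}
       in (\<exists>y\<in>P. \<forall>y'\<in>P. (\<Sum>m\<in>M. w m * y' m) \<le> (\<Sum>m\<in>M. w m * y m)) \<longrightarrow>
          (\<exists>lam\<in>D. (\<forall>r\<in>R. lam r \<in> \<int>) \<and>
                  (\<forall>\<mu>\<in>D. (\<Sum>r\<in>R. b r * lam r) \<le> (\<Sum>r\<in>R. b r * \<mu> r)))))"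

text \<open>Underlying undirected graph G(D(L)): vertices M, edge {\<Union>c, m} for c \<in> C, m \<in> c.\<close>
definition adj :: "andc set \<Rightarrow> monomial \<Rightarrow> monomial \<Rightarrow> bool" where
  "adj C u v \<longleftrightarrow> (\<exists>c\<in>C. \<exists>m\<in>c. (u = \<Union>c \<and> v = m) \<or> (u = m \<and> v = \<Union>c))"

definition has_cycle :: "monomial set \<Rightarrow> andc set \<Rightarrow> bool" where
  "has_cycle M C \<longleftrightarrow> (\<exists>vs. length vs \<ge> 3 \<and> distinct vs \<and> set vs \<subseteq> M \<and>
      (\<forall>i < length vs. adj C (vs ! i) (vs ! ((i + 1) mod length vs))))"

definition acyclic_graph :: "monomial set \<Rightarrow> andc set \<Rightarrow> bool" where
  "acyclic_graph M C \<longleftrightarrow> \<not> has_cycle M C"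

end

theory Submission
  imports Defs
begin
definition act :: "monomial set \<Rightarrow> row \<Rightarrow> (monomial \<Rightarrow> real) \<Rightarrow> real" where
  "act V r y = (\<Sum>m\<in>V. coef r m * y m)"

definition PLs :: "monomial set \<Rightarrow> andc set \<Rightarrow> (monomial \<Rightarrow> real) set" where
  "PLs V G = {y. (\<forall>m. m \<notin> V \<longrightarrow> y m = 0) \<and> (\<forall>r\<in>rows V G. act V r y \<le> rhs r)}"

definition dsum :: "row set \<Rightarrow> (row \<Rightarrow> real) \<Rightarrow> monomial \<Rightarrow> real" where
  "dsum R l m = (\<Sum>r\<in>R. l r * coef r m)"

definition Dual :: "monomial set \<Rightarrow> andc set \<Rightarrow> (monomial \<Rightarrow> real) \<Rightarrow> (row \<Rightarrow> real) set" where
  "Dual V G w = {l. (\<forall>r. r \<notin> rows V G \<longrightarrow> l r = 0) \<and> (\<forall>r\<in>rows V G. 0 \<le> l r) \<and>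
                    (\<forall>m\<in>V. dsum (rows V G) l m = w m)}"

definition obj :: "monomial set \<Rightarrow> (monomial \<Rightarrow> real) \<Rightarrow> (monomial \<Rightarrow> real) \<Rightarrow> real" where
  "obj V w y = (\<Sum>m\<in>V. w m * y m)"

definition dobj :: "row set \<Rightarrow> (row \<Rightarrow> real) \<Rightarrow> real" where
  "dobj R l = (\<Sum>r\<in>R. rhs r * l r)"

lemma PL_eq: "PL M C = PLs M C"
  unfolding PL_def PLs_def act_def by simp

lemma ind_simps[simp]: "ind True = 1" "ind False = 0"
  by (simp_all add: ind_def)

lemma coef_Int: "coef r m \<in> \<int>"
  by (cases r) (auto simp: ind_def)

lemma rhs_Int: "rhs r \<in> \<int>"
  by (cases r) auto

lemma rows_parts: "rows V G = Lo ` V \<union> Up ` V \<union> (\<lambda>(c,m). Ord c m) ` (SIGMA c:G. c) \<union> Sm ` G"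
  unfolding rows_def by auto

lemma finite_rows: "finite V \<Longrightarrow> finite G \<Longrightarrow> (\<forall>c\<in>G. finite c) \<Longrightarrow> finite (rows V G)"
  unfolding rows_parts by auto

lemma sum_rows:
  assumes "finite V" "finite G" "\<forall>c\<in>G. finite c"
  shows "(\<Sum>r\<in>rows V G. f r) = (\<Sum>m\<in>V. f (Lo m)) + (\<Sum>m\<in>V. f (Up m)) +
           (\<Sum>c\<in>G. \<Sum>m\<in>c. f (Ord c m)) + (\<Sum>c\<in>G. f (Sm c))"
proof -
  have fS: "finite (SIGMA c:G. c)" using assms by auto
  have i1: "inj_on (\<lambda>(c,m). Ord c m) (SIGMA c:G. c)" by (auto simp: inj_on_def)
  have "(\<Sum>r\<in>rows V G. f r) = (\<Sum>r\<in>Lo ` V \<union> Up ` V \<union> (\<lambda>(c,m). Ord c m) ` (SIGMA c:G. c). f r) + (\<Sum>r\<in>Sm ` G. f r)"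
    unfolding rows_parts using assms fS by (intro sum.union_disjoint) auto
  also have "(\<Sum>r\<in>Lo ` V \<union> Up ` V \<union> (\<lambda>(c,m). Ord c m) ` (SIGMA c:G. c). f r) =
     (\<Sum>r\<in>Lo ` V \<union> Up ` V. f r) + (\<Sum>r\<in>(\<lambda>(c,m). Ord c m) ` (SIGMA c:G. c). f r)"
    using assms fS by (intro sum.union_disjoint) auto
  also have "(\<Sum>r\<in>Lo ` V \<union> Up ` V. f r) = (\<Sum>r\<in>Lo ` V. f r) + (\<Sum>r\<in>Up ` V. f r)"
    using assms by (intro sum.union_disjoint) auto
  also have "(\<Sum>r\<in>Lo ` V. f r) = (\<Sum>m\<in>V. f (Lo m))" by (subst sum.reindex) (auto simp: inj_on_def)
  also have "(\<Sum>r\<in>Up ` V. f r) = (\<Sum>m\<in>V. f (Up m))" by (subst sum.reindex) (auto simp: inj_on_def)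
  also have "(\<Sum>r\<in>Sm ` G. f r) = (\<Sum>c\<in>G. f (Sm c))" by (subst sum.reindex) (auto simp: inj_on_def)
  also have "(\<Sum>r\<in>(\<lambda>(c,m). Ord c m) ` (SIGMA c:G. c). f r) = (\<Sum>(c,m)\<in>(SIGMA c:G. c). f (Ord c m))"
    using i1 by (subst sum.reindex) (auto simp: case_prod_beta)
  also have "\<dots> = (\<Sum>c\<in>G. \<Sum>m\<in>c. f (Ord c m))"
    using assms by (subst sum.Sigma[symmetric]) auto
  finally show ?thesis by simp
qed

lemma sum_ind_eq: "finite V \<Longrightarrow> (\<Sum>m\<in>V. ind (m = x) * f m) = (if x \<in> V then f x else 0)"
proof -
  assume "finite V"
  have "(\<Sum>m\<in>V. ind (m = x) * f m) = (\<Sum>m\<in>V. if m = x then f m else 0)"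
    by (intro sum.cong) (auto simp: ind_def)
  also have "\<dots> = (if x \<in> V then f x else 0)" using \<open>finite V\<close> by (simp add: sum.delta')
  finally show ?thesis .
qed

lemma act_Lo: "finite V \<Longrightarrow> x \<in> V \<Longrightarrow> act V (Lo x) y = - y x"
  unfolding act_def by (simp add: sum_negf sum_ind_eq)
lemma act_Up: "finite V \<Longrightarrow> x \<in> V \<Longrightarrow> act V (Up x) y = y x"
  unfolding act_def by (simp add: sum_ind_eq)
lemma act_Ord: "finite V \<Longrightarrow> x \<in> V \<Longrightarrow> \<Union>c \<in> V \<Longrightarrow> act V (Ord c x) y = y (\<Union>c) - y x"
  unfolding act_def by (simp add: left_diff_distrib sum_subtractf sum_ind_eq)
lemma act_Sm: "finite V \<Longrightarrow> c \<subseteq> V \<Longrightarrow> \<Union>c \<in> V \<Longrightarrow> act V (Sm c) y = (\<Sum>m\<in>c. y m) - y (\<Union>c)"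
proof -
  assume a: "finite V" "c \<subseteq> V" "\<Union>c \<in> V"
  have "act V (Sm c) y = (\<Sum>m\<in>V. ind (m \<in> c) * y m) - (\<Sum>m\<in>V. ind (m = \<Union>c) * y m)"
    unfolding act_def by (simp add: left_diff_distrib sum_subtractf)
  also have "(\<Sum>m\<in>V. ind (m \<in> c) * y m) = (\<Sum>m\<in>c. y m)"
  proof -
    have "(\<Sum>m\<in>V. ind (m \<in> c) * y m) = (\<Sum>m\<in>V. if m \<in> c then y m else 0)"
      by (intro sum.cong) (auto simp: ind_def)
    also have "\<dots> = (\<Sum>m\<in>V \<inter> c. y m)" using a by (simp add: sum.If_cases)
    also have "V \<inter> c = c" using a by auto
    finally show ?thesis .
  qed
  finally show ?thesis using a by (simp add: sum_ind_eq)
qed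

lemma weak_duality:
  assumes fV: "finite V" and fR: "finite (rows V G)"
    and y: "y \<in> PLs V G" and l: "l \<in> Dual V G w"
  shows "obj V w y \<le> dobj (rows V G) l"
proof -
  let ?R = "rows V G"
  have "obj V w y = (\<Sum>m\<in>V. (\<Sum>r\<in>?R. l r * coef r m) * y m)"
    using l unfolding obj_def Dual_def dsum_def by (intro sum.cong) auto
  also have "\<dots> = (\<Sum>r\<in>?R. l r * act V r y)"
    unfolding act_def by (simp add: sum_distrib_left sum_distrib_right mult.assoc) (rule sum.swap)
  also have "\<dots> \<le> (\<Sum>r\<in>?R. rhs r * l r)"
  proof (intro sum_mono)
    fix r assume r: "r \<in> ?R"
    have "l r * act V r y \<le> l r * rhs r"
      using y l r unfolding PLs_def Dual_def by (intro mult_left_mono) auto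
    then show "l r * act V r y \<le> rhs r * l r" by (simp add: mult.commute)
  qed
  finally show ?thesis unfolding dobj_def .
qed

lemma sum_ind_eq2: "finite V \<Longrightarrow> (\<Sum>m\<in>V. f m * ind (x = m)) = (if x \<in> V then f x else 0)"
proof -
  assume "finite V"
  have "(\<Sum>m\<in>V. f m * ind (x = m)) = (\<Sum>m\<in>V. if x = m then f m else 0)"
    by (intro sum.cong) (auto simp: ind_def)
  also have "\<dots> = (if x \<in> V then f x else 0)" using \<open>finite V\<close> by (simp add: sum.delta)
  finally show ?thesis .
qed

lemma dsum_formula:
  assumes "finite V" "finite G" "\<forall>c\<in>G. finite c" "x \<in> V"
  shows "dsum (rows V G) l x = - l (Lo x) + l (Up x) +
     (\<Sum>c\<in>G. \<Sum>m\<in>c. l (Ord c m) * (ind (x = \<Union>c) - ind (x = m))) +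
     (\<Sum>c\<in>G. l (Sm c) * (ind (x \<in> c) - ind (x = \<Union>c)))"
proof -
  have "dsum (rows V G) l x = (\<Sum>m\<in>V. l (Lo m) * (- ind (x = m))) + (\<Sum>m\<in>V. l (Up m) * ind (x = m)) +
     (\<Sum>c\<in>G. \<Sum>m\<in>c. l (Ord c m) * (ind (x = \<Union>c) - ind (x = m))) +
     (\<Sum>c\<in>G. l (Sm c) * (ind (x \<in> c) - ind (x = \<Union>c)))"
    unfolding dsum_def using assms by (subst sum_rows) simp_all
  also have "(\<Sum>m\<in>V. l (Lo m) * (- ind (x = m))) = - l (Lo x)"
    using assms by (simp add: sum_negf sum_ind_eq2)
  also have "(\<Sum>m\<in>V. l (Up m) * ind (x = m)) = l (Up x)"
    using assms by (simp add: sum_ind_eq2)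
  finally show ?thesis .
qed

lemma dsum_add: "dsum R (\<lambda>r. f r + g r) x = dsum R f x + dsum R g x"
  unfolding dsum_def by (simp add: distrib_right sum.distrib)

lemma dobj_add: "dobj R (\<lambda>r. f r + g r) = dobj R f + dobj R g"
  unfolding dobj_def by (simp add: distrib_left sum.distrib)

lemma Ints_max: "a \<in> \<int> \<Longrightarrow> b \<in> \<int> \<Longrightarrow> max a b \<in> \<int>"
  by (simp add: max_def)
lemma Ints_min: "a \<in> \<int> \<Longrightarrow> b \<in> \<int> \<Longrightarrow> min a b \<in> \<int>"
  by (simp add: min_def)

locale SL =
  fixes M :: "nat set set" and C :: "nat set set set"
  assumes finM: "finite M" and finC: "finite C"
  and C_sub: "c \<in> C \<Longrightarrow> c \<subseteq> M" and C_res: "c \<in> C \<Longrightarrow> \<Union>c \<in> M"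
  and C_card: "c \<in> C \<Longrightarrow> m \<in> c \<Longrightarrow> card m < card (\<Union>c)"
  and C_inj: "c \<in> C \<Longrightarrow> c' \<in> C \<Longrightarrow> \<Union>c = \<Union>c' \<Longrightarrow> c = c'"
  and M_ne: "m \<in> M \<Longrightarrow> m \<noteq> {} \<and> finite m"
  and M_single: "m \<in> M \<Longrightarrow> i \<in> m \<Longrightarrow> {i} \<in> M"
  and M_dec: "m \<in> M \<Longrightarrow> (\<exists>i. m = {i}) \<or> (\<exists>c\<in>C. \<Union>c = m)"
begin

lemma C_fin: "c \<in> C \<Longrightarrow> finite c"
  using C_sub finM finite_subset by blast

lemma C_ne: "c \<in> C \<Longrightarrow> c \<noteq> {}"
  using C_res M_ne by (metis Union_empty)

lemma C_notin: "c \<in> C \<Longrightarrow> \<Union>c \<notin> c"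
  using C_card by (metis less_irrefl)

lemma C_card_ge1: "c \<in> C \<Longrightarrow> card c \<ge> 1"
  using C_fin C_ne by (simp add: Suc_le_eq card_gt_0_iff)

definition sys :: "monomial set \<Rightarrow> andc set \<Rightarrow> bool" where
  "sys V G \<longleftrightarrow> V \<subseteq> M \<and> G \<subseteq> C \<and> (\<forall>c\<in>G. c \<subseteq> V \<and> \<Union>c \<in> V)"

lemma sys_fin:
  assumes "sys V G"
  shows "finite V" "finite G" "\<forall>c\<in>G. finite c" "finite (rows V G)"
proof -
  show fV: "finite V" using assms finM finite_subset unfolding sys_def by metis
  show fG: "finite G" using assms finC finite_subset unfolding sys_def by metis
  show fc: "\<forall>c\<in>G. finite c" using assms C_fin unfolding sys_def by auto
  show "finite (rows V G)" using fV fG fc by (rule finite_rows)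
qed

lemma weak:
  "sys V G \<Longrightarrow> y \<in> PLs V G \<Longrightarrow> l \<in> Dual V G w \<Longrightarrow> obj V w y \<le> dobj (rows V G) l"
  by (rule weak_duality[OF sys_fin(1) sys_fin(4)])

definition Q :: "monomial set \<Rightarrow> andc set \<Rightarrow> bool" where
  "Q V G \<longleftrightarrow> (\<forall>w. (\<forall>m\<in>V. w m \<in> \<int>) \<longrightarrow> (\<exists>x l. x \<in> PLs V G \<and> (\<forall>m\<in>V. x m \<in> \<int>) \<and>
      l \<in> Dual V G w \<and> (\<forall>r. l r \<in> \<int>) \<and> obj V w x = dobj (rows V G) l))"

lemma Q_empty:
  assumes "finite V"
  shows "Q V {}"
  unfolding Q_def
proof (intro allI impI)
  fix w :: "monomial \<Rightarrow> real" assume wI: "\<forall>m\<in>V. w m \<in> \<int>"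
  define x where "x = (\<lambda>m. if m \<in> V \<and> w m > 0 then 1 else 0 :: real)"
  define l where "l = (\<lambda>r. case r of Lo m \<Rightarrow> if m \<in> V then max (- w m) 0 else 0
                          | Up m \<Rightarrow> if m \<in> V then max (w m) 0 else 0 | _ \<Rightarrow> 0)"
  have rows0: "rows V {} = Lo ` V \<union> Up ` V" unfolding rows_def by auto
  have "x \<in> PLs V {}"
    unfolding PLs_def rows0 using assms by (auto simp: act_Lo act_Up x_def)
  moreover have "\<forall>m\<in>V. x m \<in> \<int>" by (auto simp: x_def)
  moreover have "l \<in> Dual V {} w"
    unfolding Dual_def mem_Collect_eq
  proof (intro conjI ballI allI impI)
    fix r assume "r \<notin> rows V {}" then show "l r = 0" unfolding rows0 l_def by (cases r) auto
  next
    fix r assume "r \<in> rows V {}" then show "0 \<le> l r" unfolding rows0 l_def by auto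
  next
    fix m assume "m \<in> V" then show "dsum (rows V {}) l m = w m"
      using assms by (subst dsum_formula) (auto simp: l_def)
  qed
  moreover have "\<forall>r. l r \<in> \<int>"
    using wI by (auto simp: l_def split: row.split intro!: Ints_max)
  moreover have "obj V w x = dobj (rows V {}) l"
  proof -
    have "dobj (rows V {}) l = (\<Sum>m\<in>V. max (w m) 0)"
      unfolding dobj_def using assms by (subst sum_rows) (auto simp: l_def)
    also have "\<dots> = obj V w x" unfolding obj_def x_def by (intro sum.cong) auto
    finally show ?thesis by simp
  qed
  ultimately show "\<exists>x l. x \<in> PLs V {} \<and> (\<forall>m\<in>V. x m \<in> \<int>) \<and> l \<in> Dual V {} w \<and>
       (\<forall>r. l r \<in> \<int>) \<and> obj V w x = dobj (rows V {}) l" by blast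
qed

end

definition pos :: "real \<Rightarrow> real" where "pos a = max a 0"

lemma pos_nonneg: "0 \<le> pos a" by (simp add: pos_def)
lemma pos_diff: "pos a - pos (- a) = a" by (simp add: pos_def max_def)
lemma pos_Int: "a \<in> \<int> \<Longrightarrow> pos a \<in> \<int>" by (simp add: pos_def Ints_max)

context SL begin

lemma Q_star:
  assumes cC: "c \<in> C"
  shows "Q (insert (\<Union>c) c) {c}"
  unfolding Q_def
proof (intro allI impI)
  fix w :: "monomial \<Rightarrow> real"
  define p where "p = \<Union>c"
  define V where "V = insert p c"
  assume wI0: "\<forall>m\<in>insert (\<Union>c) c. w m \<in> \<int>"
  then have wI: "\<And>m. m \<in> V \<Longrightarrow> w m \<in> \<int>" unfolding V_def p_def by auto
  have pc: "p \<notin> c" using C_notin cC p_def by auto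
  have fc: "finite c" using C_fin cC by auto
  have cne: "c \<noteq> {}" using C_ne cC by auto
  have fV: "finite V" using fc V_def by auto
  define N where "N = (\<Sum>m\<in>c. pos (- w m))"
  define P where "P = (\<Sum>m\<in>c. pos (w m))"
  define mu where "mu = Min (w ` c)"
  define s where "s = min (pos mu) (pos (- w p))"
  define A where "A = w p - N + s"
  define l where "l = (\<lambda>r. case r of
      Lo m \<Rightarrow> if m = p then pos (- A) else 0
    | Up m \<Rightarrow> if m = p then pos A else if m \<in> c then pos (w m) - s else 0
    | Ord c' m \<Rightarrow> if c' = c \<and> m \<in> c then pos (- w m) else 0
    | Sm c' \<Rightarrow> if c' = c then s else 0)"
  have mu_le: "\<And>m. m \<in> c \<Longrightarrow> mu \<le> w m" unfolding mu_def using fc by auto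
  have "Min (w ` c) \<in> w ` c" using fc cne by (intro Min_in) auto
  then obtain m0 where m0: "m0 \<in> c" "w m0 = mu" unfolding mu_def by auto
  have s_le: "\<And>m. m \<in> c \<Longrightarrow> s \<le> pos (w m)"
    using mu_le unfolding s_def pos_def by fastforce
  have s_nn: "0 \<le> s" unfolding s_def by (simp add: pos_nonneg)
  have cI: "\<And>m. m \<in> c \<Longrightarrow> w m \<in> \<int>" using wI V_def by auto
  have pI: "w p \<in> \<int>" using wI V_def by auto
  have NI: "N \<in> \<int>" unfolding N_def using cI by (intro Ints_sum pos_Int) (simp add: Ints_minus)
  have PI: "P \<in> \<int>" unfolding P_def using cI by (intro Ints_sum pos_Int) simp
  have muI: "mu \<in> \<int>" using m0 cI by metis
  have sI: "s \<in> \<int>" unfolding s_def using muI pI by (intro Ints_min pos_Int) (auto simp: Ints_minus)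
  have AI: "A \<in> \<int>" unfolding A_def using pI NI sI by (intro Ints_add Ints_diff) auto
  have rowsV: "rows V {c} = Lo ` V \<union> Up ` V \<union> {Ord c m |m. m \<in> c} \<union> {Sm c}"
    unfolding rows_def by auto
  have Vsub: "c \<subseteq> V" "p \<in> V" unfolding V_def by auto
  have ldual: "l \<in> Dual V {c} w"
    unfolding Dual_def mem_Collect_eq
  proof (intro conjI ballI allI impI)
    fix r assume "r \<notin> rows V {c}"
    then have "r \<notin> Lo ` V \<union> Up ` V \<union> {Ord c m |m. m \<in> c} \<union> {Sm c}" using rowsV by simp
    then show "l r = 0" unfolding l_def V_def by (cases r) auto
  next
    fix r assume "r \<in> rows V {c}"
    then have "r \<in> Lo ` V \<union> Up ` V \<union> {Ord c m |m. m \<in> c} \<union> {Sm c}" using rowsV by simp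
    then show "0 \<le> l r"
      unfolding l_def using s_le s_nn pos_nonneg by (auto simp: V_def)
  next
    fix x assume xV: "x \<in> V"
    have ordsum: "(\<Sum>m\<in>c. l (Ord c m) * (ind (x = \<Union>c) - ind (x = m))) =
        N * ind (x = p) - (if x \<in> c then pos (- w x) else 0)"
    proof -
      have "(\<Sum>m\<in>c. l (Ord c m) * (ind (x = \<Union>c) - ind (x = m))) =
            (\<Sum>m\<in>c. pos (- w m) * ind (x = p) - pos (- w m) * ind (x = m))"
        by (intro sum.cong) (auto simp: l_def p_def right_diff_distrib)
      also have "\<dots> = N * ind (x = p) - (if x \<in> c then pos (- w x) else 0)"
        using fc by (simp add: sum_subtractf sum_ind_eq2 N_def sum_distrib_right)
      finally show ?thesis .
    qed
    have "dsum (rows V {c}) l x = - l (Lo x) + l (Up x) +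
       (\<Sum>m\<in>c. l (Ord c m) * (ind (x = \<Union>c) - ind (x = m))) +
       l (Sm c) * (ind (x \<in> c) - ind (x = \<Union>c))"
      using fV fc xV by (subst dsum_formula) auto
    also have "\<dots> = w x"
    proof (cases "x = p")
      case True
      then show ?thesis unfolding ordsum using pc
        by (simp add: l_def p_def[symmetric]) (smt (verit) pos_diff A_def)
    next
      case False
      then have xc: "x \<in> c" using xV V_def by auto
      then show ?thesis unfolding ordsum using False
        by (simp add: l_def p_def[symmetric]) (smt (verit) pos_diff)
    qed
    finally show "dsum (rows V {c}) l x = w x" .
  qed
  have lI: "\<forall>r. l r \<in> \<int>"
    unfolding l_def using AI sI cI
    by (auto split: row.split intro!: pos_Int Ints_diff simp: Ints_minus)
  have dval: "dobj (rows V {c}) l = pos A + P - s"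
  proof -
    have "dobj (rows V {c}) l = (\<Sum>m\<in>V. l (Up m)) + (real (card c) - 1) * s"
      unfolding dobj_def using fV fc by (subst sum_rows) (auto simp: l_def)
    also have "(\<Sum>m\<in>V. l (Up m)) = pos A + (\<Sum>m\<in>c. pos (w m) - s)"
      unfolding V_def using fc pc by (subst sum.insert) (auto simp: l_def intro!: sum.cong)
    also have "(\<Sum>m\<in>c. pos (w m) - s) = P - real (card c) * s"
      by (simp add: sum_subtractf P_def)
    finally show ?thesis by (simp add: algebra_simps)
  qed
  have Veq: "insert (\<Union>c) c = V" by (simp add: V_def p_def)
  have PN: "P - N = (\<Sum>m\<in>c. w m)"
    unfolding P_def N_def by (simp add: sum_subtractf[symmetric] pos_diff)
  have "\<exists>x l. x \<in> PLs V {c} \<and> (\<forall>m\<in>V. x m \<in> \<int>) \<and>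
         l \<in> Dual V {c} w \<and> (\<forall>r. l r \<in> \<int>) \<and>
         obj V w x = dobj (rows V {c}) l"
  proof (cases "A \<ge> 0")
    case True
    define x where "x = (\<lambda>m. if m \<in> V then 1 else 0 :: real)"
    have "x \<in> PLs V {c}"
      unfolding PLs_def mem_Collect_eq
    proof (intro conjI allI impI ballI)
      fix m assume "m \<notin> V" then show "x m = 0" by (simp add: x_def)
    next
      fix r assume r: "r \<in> rows V {c}"
      show "act V r x \<le> rhs r"
        using r unfolding rowsV
      proof (elim UnE)
        assume "r \<in> Lo ` V" then show ?thesis using fV by (auto simp: act_Lo x_def)
      next
        assume "r \<in> Up ` V" then show ?thesis using fV by (auto simp: act_Up x_def)
      next
        assume "r \<in> {Ord c m |m. m \<in> c}" then show ?thesis using fV Vsub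
          by (auto simp: act_Ord x_def p_def)
      next
        assume "r \<in> {Sm c}" then show ?thesis using fV Vsub
          by (auto simp: act_Sm x_def p_def[symmetric] subsetD)
      qed
    qed
    moreover have "obj V w x = dobj (rows V {c}) l"
    proof -
      have "obj V w x = (\<Sum>m\<in>V. w m)" unfolding obj_def x_def by simp
      also have "\<dots> = w p + (\<Sum>m\<in>c. w m)" unfolding V_def using fc pc by simp
      finally show ?thesis using dval True PN unfolding A_def pos_def by simp
    qed
    ultimately show ?thesis using ldual lI by (intro exI[of _ x] exI[of _ l]) (auto simp: x_def)
  next
    case False
    have s_eq: "s = pos mu"
    proof (rule ccontr)
      assume "s \<noteq> pos mu"
      then have lt: "pos (- w p) < pos mu" unfolding s_def by auto
      then have "mu > 0" unfolding pos_def by (auto simp: max_def split: if_splits)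
      then have "N = 0" unfolding N_def pos_def using mu_le by (intro sum.neutral) fastforce
      then have "A \<ge> 0" unfolding A_def s_def using lt unfolding pos_def by auto
      then show False using False by simp
    qed
    define x where "x = (\<lambda>m. if m \<in> c \<and> m \<noteq> m0 \<and> w m > 0 then 1 else 0 :: real)"
    have sumx: "(\<Sum>m\<in>c. x m) \<le> real (card c) - 1"
    proof -
      have "(\<Sum>m\<in>c. x m) = (\<Sum>m\<in>c - {m0}. x m)"
        using fc m0 by (subst sum.remove[of _ m0]) (auto simp: x_def)
      also have "\<dots> \<le> (\<Sum>m\<in>c - {m0}. 1)" by (intro sum_mono) (auto simp: x_def)
      also have "\<dots> = real (card c) - 1"
      proof -
        have "card c \<ge> 1" using fc m0 by (metis One_nat_def Suc_leI card_gt_0_iff empty_iff)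
        then show ?thesis using fc m0 by (simp add: of_nat_diff)
      qed
      finally show ?thesis .
    qed
    have "x \<in> PLs V {c}"
      unfolding PLs_def mem_Collect_eq
    proof (intro conjI allI impI ballI)
      fix m assume "m \<notin> V" then show "x m = 0" by (auto simp: x_def V_def)
    next
      fix r assume r: "r \<in> rows V {c}"
      have xp: "x (\<Union>c) = 0" using pc p_def x_def by auto
      show "act V r x \<le> rhs r"
        using r unfolding rowsV
      proof (elim UnE)
        assume "r \<in> Lo ` V" then show ?thesis using fV by (auto simp: act_Lo x_def)
      next
        assume "r \<in> Up ` V" then show ?thesis using fV by (auto simp: act_Up x_def)
      next
        assume "r \<in> {Ord c m |m. m \<in> c}" then show ?thesis using fV Vsub xp
          by (auto simp: act_Ord p_def x_def)
      next
        assume "r \<in> {Sm c}" then show ?thesis using fV Vsub xp sumx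
          by (auto simp: act_Sm p_def)
      qed
    qed
    moreover have "obj V w x = dobj (rows V {c}) l"
    proof -
      have "obj V w x = w p * x p + (\<Sum>m\<in>c. w m * x m)"
        unfolding obj_def V_def using fc pc by simp
      also have "x p = 0" using pc x_def by auto
      also have "(\<Sum>m\<in>c. w m * x m) = (\<Sum>m\<in>c. if m = m0 then 0 else pos (w m))"
        by (intro sum.cong) (auto simp: x_def pos_def)
      also have "\<dots> = P - pos (w m0)"
        unfolding P_def using fc m0 by (simp add: sum.If_cases sum_diff1 Diff_eq[symmetric])
      finally show ?thesis using dval False s_eq m0 unfolding pos_def by auto
    qed
    ultimately show ?thesis using ldual lI by (intro exI[of _ x] exI[of _ l]) (auto simp: x_def)
  qed
  then show "\<exists>x l. x \<in> PLs (insert (\<Union>c) c) {c} \<and> (\<forall>m\<in>insert (\<Union>c) c. x m \<in> \<int>) \<and>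
         l \<in> Dual (insert (\<Union>c) c) {c} w \<and> (\<forall>r. l r \<in> \<int>) \<and>
         obj (insert (\<Union>c) c) w x = dobj (rows (insert (\<Union>c) c) {c}) l" by (simp only: Veq)
qed

end

lemma rows_Un: "rows (V1 \<union> V2) (G1 \<union> G2) = rows V1 G1 \<union> rows V2 G2"
  unfolding rows_def by auto

lemma rows_mono: "V1 \<subseteq> V2 \<Longrightarrow> G1 \<subseteq> G2 \<Longrightarrow> rows V1 G1 \<subseteq> rows V2 G2"
  unfolding rows_def by auto

lemma dsum_supp: "finite R \<Longrightarrow> R' \<subseteq> R \<Longrightarrow> (\<forall>r. r \<notin> R' \<longrightarrow> l r = 0) \<Longrightarrow> dsum R l m = dsum R' l m"
  unfolding dsum_def by (rule sum.mono_neutral_right) auto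

lemma dobj_supp: "finite R \<Longrightarrow> R' \<subseteq> R \<Longrightarrow> (\<forall>r. r \<notin> R' \<longrightarrow> l r = 0) \<Longrightarrow> dobj R l = dobj R' l"
  unfolding dobj_def by (rule sum.mono_neutral_right) auto

context SL begin

lemma coef_zero:
  assumes "sys V G" "r \<in> rows V G" "m \<notin> V"
  shows "coef r m = 0"
proof -
  have h: "m \<notin> c \<and> m \<noteq> \<Union>c" if cG: "c \<in> G" for c
  proof -
    have "c \<subseteq> V \<and> \<Union>c \<in> V" using assms(1) cG unfolding sys_def by blast
    then show ?thesis using assms(3) by (metis subsetD)
  qed
  show ?thesis
  proof (cases r)
    case (Lo x)
    then have "x \<in> V" using assms(2) unfolding rows_def by blast
    then have "m \<noteq> x" using assms(3) by metis
    then show ?thesis using Lo by (simp add: ind_def)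
  next
    case (Up x)
    then have "x \<in> V" using assms(2) unfolding rows_def by blast
    then have "m \<noteq> x" using assms(3) by metis
    then show ?thesis using Up by (simp add: ind_def)
  next
    case (Ord c x)
    then have "c \<in> G" "x \<in> c" using assms(2) unfolding rows_def by blast+
    then have "m \<noteq> x" "m \<noteq> \<Union>c" using h by metis+
    then show ?thesis using Ord by (simp add: ind_def)
  next
    case (Sm c)
    then have "c \<in> G" using assms(2) unfolding rows_def by blast
    then have "m \<notin> c" "m \<noteq> \<Union>c" using h by metis+
    then show ?thesis using Sm by (simp add: ind_def)
  qed
qed

lemma dsum_out: "sys V G \<Longrightarrow> m \<notin> V \<Longrightarrow> dsum (rows V G) l m = 0"
  unfolding dsum_def by (simp add: coef_zero)

lemma act_ext:
  assumes "sys V G" "r \<in> rows V G" "V \<subseteq> V'" "finite V'" "\<forall>m\<in>V. y m = z m"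
  shows "act V' r y = act V r z"
proof -
  have "act V' r y = act V r y" unfolding act_def
    using assms coef_zero by (intro sum.mono_neutral_right) auto
  also have "\<dots> = act V r z" unfolding act_def using assms by (intro sum.cong) auto
  finally show ?thesis .
qed

lemma sys_Un: "sys V1 G1 \<Longrightarrow> sys V2 G2 \<Longrightarrow> sys (V1 \<union> V2) (G1 \<union> G2)"
  unfolding sys_def by (metis Un_iff Un_least le_supI1 le_supI2)

definition IP :: "monomial set \<Rightarrow> andc set \<Rightarrow> (monomial \<Rightarrow> real) set" where
  "IP V G = {x \<in> PLs V G. \<forall>m\<in>V. x m \<in> \<int>}"

lemma IP_01:
  assumes "sys V G" "x \<in> IP V G" "m \<in> V"
  shows "x m = 0 \<or> x m = 1"
proof -
  have fV: "finite V" using sys_fin assms by auto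
  have "Lo m \<in> rows V G" "Up m \<in> rows V G" using assms unfolding rows_def by auto
  then have "- x m \<le> 0" "x m \<le> 1" using assms fV unfolding IP_def PLs_def
    by (auto simp: act_Lo act_Up)
  moreover have "x m \<in> \<int>" using assms unfolding IP_def by auto
  ultimately show ?thesis
  proof -
    assume a: "- x m \<le> 0" "x m \<le> 1" "x m \<in> \<int>"
    then obtain k where k: "x m = of_int k" by (auto elim: Ints_cases)
    then have "0 \<le> k" "k \<le> 1" using a by auto
    then have "k = 0 \<or> k = 1" by auto
    then show ?thesis using k by auto
  qed
qed

lemma IP_finite:
  assumes "sys V G"
  shows "finite (IP V G)"
proof -
  have "IP V G \<subseteq> {f. \<forall>x. (x \<in> V \<longrightarrow> f x \<in> {0,1}) \<and> (x \<notin> V \<longrightarrow> f x = 0)}"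
    using IP_01[OF assms] unfolding IP_def PLs_def by auto
  moreover have "finite {f. \<forall>x. (x \<in> V \<longrightarrow> f x \<in> {0::real,1}) \<and> (x \<notin> V \<longrightarrow> f x = 0)}"
    using sys_fin[OF assms] by (intro finite_set_of_finite_funs) auto
  ultimately show ?thesis using finite_subset by blast
qed

lemma IP_const:
  assumes "sys V G" "t = 0 \<or> t = 1"
  shows "(\<lambda>m. if m \<in> V then t else 0) \<in> IP V G"
proof -
  have fV: "finite V" using sys_fin assms by auto
  {
    fix r assume r: "r \<in> rows V G"
    have "act V r (\<lambda>m. if m \<in> V then t else 0) \<le> rhs r"
    proof (cases r)
      case (Lo m) then show ?thesis using r fV assms by (auto simp: act_Lo rows_def)
    next
      case (Up m) then show ?thesis using r fV assms by (auto simp: act_Up rows_def)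
    next
      case (Ord c m)
      then have "c \<in> G" "m \<in> c" using r unfolding rows_def by auto
      then have "m \<in> V" "\<Union>c \<in> V" using assms unfolding sys_def by auto
      then show ?thesis using Ord fV by (simp add: act_Ord)
    next
      case (Sm c)
      then have cG: "c \<in> G" using r unfolding rows_def by auto
      then have cV: "c \<subseteq> V" "\<Union>c \<in> V" and cC: "c \<in> C" using assms unfolding sys_def by auto
      have "act V r (\<lambda>m. if m \<in> V then t else 0) = real (card c) * t - t"
        using Sm fV cV by (simp add: act_Sm subsetD)
      also have "\<dots> \<le> real (card c) - 1" using assms(2) C_card_ge1[OF cC] by auto
      finally show ?thesis using Sm by simp
    qed
  }
  then show ?thesis unfolding IP_def PLs_def using assms by auto
qed

definition Aval :: "monomial set \<Rightarrow> andc set \<Rightarrow> monomial \<Rightarrow> (monomial \<Rightarrow> real) \<Rightarrow> real \<Rightarrow> real" where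
  "Aval V G v w t = Max ((\<lambda>x. obj (V - {v}) w x) ` {x \<in> IP V G. x v = t})"

lemma Aval_props:
  assumes "sys V G" "v \<in> V" "t = 0 \<or> t = 1"
  shows "\<exists>z\<in>IP V G. z v = t \<and> obj (V - {v}) w z = Aval V G v w t"
    "\<And>z. z \<in> IP V G \<Longrightarrow> z v = t \<Longrightarrow> obj (V - {v}) w z \<le> Aval V G v w t"
proof -
  let ?S = "{x \<in> IP V G. x v = t}"
  have fin: "finite ?S" using IP_finite[OF assms(1)] by auto
  have ne: "?S \<noteq> {}" using IP_const[OF assms(1,3)] assms(2) by force
  have "Aval V G v w t \<in> (\<lambda>x. obj (V - {v}) w x) ` ?S"
    unfolding Aval_def using fin ne by (intro Max_in) auto
  then show "\<exists>z\<in>IP V G. z v = t \<and> obj (V - {v}) w z = Aval V G v w t" by auto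
  show "\<And>z. z \<in> IP V G \<Longrightarrow> z v = t \<Longrightarrow> obj (V - {v}) w z \<le> Aval V G v w t"
    unfolding Aval_def using fin by (intro Max_ge) auto
qed

lemma Aval_Int:
  assumes "sys V G" "v \<in> V" "t = 0 \<or> t = 1" "\<forall>m\<in>V. w m \<in> \<int>"
  shows "Aval V G v w t \<in> \<int>"
proof -
  obtain z where z: "z \<in> IP V G" "obj (V - {v}) w z = Aval V G v w t"
    using Aval_props(1)[OF assms(1-3)] by blast
  have "obj (V - {v}) w z \<in> \<int>" unfolding obj_def using z assms unfolding IP_def by auto
  then show ?thesis using z by simp
qed

lemma obj_split:
  assumes "finite V" "v \<in> V"
  shows "obj V w x = obj (V - {v}) w x + w v * x v"
  unfolding obj_def using assms by (simp add: sum.remove)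

lemma Q_value:
  assumes S: "sys V G" and QV: "Q V G" and v: "v \<in> V" and wI: "\<forall>m\<in>V. w m \<in> \<int>" and aI: "a \<in> \<int>"
  shows "\<exists>l. l \<in> Dual V G (w(v := a)) \<and> (\<forall>r. l r \<in> \<int>) \<and>
      dobj (rows V G) l = max (Aval V G v w 0) (Aval V G v w 1 + a)"
proof -
  have fV: "finite V" using sys_fin S by auto
  have "\<forall>m\<in>V. (w(v := a)) m \<in> \<int>" using wI aI by auto
  then obtain x l where x: "x \<in> PLs V G" "\<forall>m\<in>V. x m \<in> \<int>" and l: "l \<in> Dual V G (w(v := a))"
    "\<forall>r. l r \<in> \<int>" and eq: "obj V (w(v := a)) x = dobj (rows V G) l"
    using QV unfolding Q_def by blast
  have xIP: "x \<in> IP V G" using x unfolding IP_def by auto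
  have objw: "\<And>z. obj V (w(v := a)) z = obj (V - {v}) w z + a * z v"
  proof -
    fix z
    have "obj V (w(v := a)) z = obj (V - {v}) (w(v := a)) z + a * z v" using obj_split[OF fV v] by simp
    also have "obj (V - {v}) (w(v := a)) z = obj (V - {v}) w z" unfolding obj_def by (intro sum.cong) auto
    finally show "obj V (w(v := a)) z = obj (V - {v}) w z + a * z v" .
  qed
  have le: "dobj (rows V G) l \<le> max (Aval V G v w 0) (Aval V G v w 1 + a)"
  proof -
    have "x v = 0 \<or> x v = 1" using IP_01[OF S xIP v] .
    then show ?thesis
    proof
      assume x0: "x v = 0"
      have "obj (V - {v}) w x \<le> Aval V G v w 0" using Aval_props(2)[OF S v, of 0 x w] xIP x0 by auto
      then show ?thesis using eq objw[of x] x0 by auto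
    next
      assume x1: "x v = 1"
      have "obj (V - {v}) w x \<le> Aval V G v w 1" using Aval_props(2)[OF S v, of 1 x w] xIP x1 by auto
      then show ?thesis using eq objw[of x] x1 by auto
    qed
  qed
  have ge0: "Aval V G v w 0 \<le> dobj (rows V G) l"
  proof -
    obtain z where z: "z \<in> IP V G" "z v = 0" "obj (V - {v}) w z = Aval V G v w 0"
      using Aval_props(1)[OF S v, of 0 w] by auto
    have "obj V (w(v := a)) z \<le> dobj (rows V G) l" using weak[OF S _ l(1)] z unfolding IP_def by auto
    then show ?thesis using objw[of z] z by auto
  qed
  have ge1: "Aval V G v w 1 + a \<le> dobj (rows V G) l"
  proof -
    obtain z where z: "z \<in> IP V G" "z v = 1" "obj (V - {v}) w z = Aval V G v w 1"
      using Aval_props(1)[OF S v, of 1 w] by auto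
    have "obj V (w(v := a)) z \<le> dobj (rows V G) l" using weak[OF S _ l(1)] z unfolding IP_def by auto
    then show ?thesis using objw[of z] z by auto
  qed
  show ?thesis using le ge0 ge1 l by (intro exI[of _ l]) auto
qed

end

context SL begin

lemma Q_D: "Q V G \<Longrightarrow> \<forall>m\<in>V. w m \<in> \<int> \<Longrightarrow> \<exists>x l. x \<in> PLs V G \<and> (\<forall>m\<in>V. x m \<in> \<int>) \<and>
      l \<in> Dual V G w \<and> (\<forall>r. l r \<in> \<int>) \<and> obj V w x = dobj (rows V G) l"
  unfolding Q_def by blast

lemma Dual_dsum:
  assumes S: "sys V G" and l: "l \<in> Dual V G w"
  shows "dsum (rows V G) l m = (if m \<in> V then w m else 0)"
  using l dsum_out[OF S] unfolding Dual_def by auto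

lemma glue_dual:
  assumes S1: "sys V1 G1" and S2: "sys V2 G2"
    and l1: "l1 \<in> Dual V1 G1 w1" and l2: "l2 \<in> Dual V2 G2 w2"
    and wv: "\<And>m. m \<in> V1 \<union> V2 \<Longrightarrow> w m = (if m \<in> V1 then w1 m else 0) + (if m \<in> V2 then w2 m else 0)"
  shows "(\<lambda>r. l1 r + l2 r) \<in> Dual (V1 \<union> V2) (G1 \<union> G2) w"
    "dobj (rows (V1 \<union> V2) (G1 \<union> G2)) (\<lambda>r. l1 r + l2 r) = dobj (rows V1 G1) l1 + dobj (rows V2 G2) l2"
proof -
  let ?R = "rows (V1 \<union> V2) (G1 \<union> G2)"
  have S: "sys (V1 \<union> V2) (G1 \<union> G2)" using sys_Un[OF S1 S2] .
  have fR: "finite ?R" using sys_fin[OF S] by auto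
  have R1: "rows V1 G1 \<subseteq> ?R" and R2: "rows V2 G2 \<subseteq> ?R" by (auto simp: rows_Un)
  have z1: "\<forall>r. r \<notin> rows V1 G1 \<longrightarrow> l1 r = 0" and z2: "\<forall>r. r \<notin> rows V2 G2 \<longrightarrow> l2 r = 0"
    using l1 l2 unfolding Dual_def by auto
  show "(\<lambda>r. l1 r + l2 r) \<in> Dual (V1 \<union> V2) (G1 \<union> G2) w"
    unfolding Dual_def mem_Collect_eq
  proof (intro conjI allI impI ballI)
    fix r assume r: "r \<notin> ?R"
    have "r \<notin> rows V1 G1" "r \<notin> rows V2 G2" using R1 R2 r by blast+
    then show "l1 r + l2 r = 0" using z1 z2 by simp
  next
    fix r assume "r \<in> ?R"
    have "0 \<le> l1 r" using l1 z1 unfolding Dual_def by (cases "r \<in> rows V1 G1") auto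
    moreover have "0 \<le> l2 r" using l2 z2 unfolding Dual_def by (cases "r \<in> rows V2 G2") auto
    ultimately show "0 \<le> l1 r + l2 r" by simp
  next
    fix m assume m: "m \<in> V1 \<union> V2"
    have "dsum ?R (\<lambda>r. l1 r + l2 r) m = dsum ?R l1 m + dsum ?R l2 m" by (rule dsum_add)
    also have "dsum ?R l1 m = dsum (rows V1 G1) l1 m" using dsum_supp[OF fR R1 z1] .
    also have "dsum ?R l2 m = dsum (rows V2 G2) l2 m" using dsum_supp[OF fR R2 z2] .
    finally show "dsum ?R (\<lambda>r. l1 r + l2 r) m = w m"
      using Dual_dsum[OF S1 l1, of m] Dual_dsum[OF S2 l2, of m] wv[OF m] by simp
  qed
  have "dobj ?R (\<lambda>r. l1 r + l2 r) = dobj ?R l1 + dobj ?R l2" by (rule dobj_add)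
  also have "dobj ?R l1 = dobj (rows V1 G1) l1" using dobj_supp[OF fR R1 z1] .
  also have "dobj ?R l2 = dobj (rows V2 G2) l2" using dobj_supp[OF fR R2 z2] .
  finally show "dobj ?R (\<lambda>r. l1 r + l2 r) = dobj (rows V1 G1) l1 + dobj (rows V2 G2) l2" .
qed

lemma glue_dobj:
  assumes S1: "sys V1 G1" and S2: "sys V2 G2"
    and l1: "l1 \<in> Dual V1 G1 w1" and l2: "l2 \<in> Dual V2 G2 w2"
  shows "dobj (rows (V1 \<union> V2) (G1 \<union> G2)) (\<lambda>r. l1 r + l2 r) = dobj (rows V1 G1) l1 + dobj (rows V2 G2) l2"
proof -
  let ?R = "rows (V1 \<union> V2) (G1 \<union> G2)"
  have S: "sys (V1 \<union> V2) (G1 \<union> G2)" using sys_Un[OF S1 S2] .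
  have fR: "finite ?R" using sys_fin[OF S] by auto
  have R1: "rows V1 G1 \<subseteq> ?R" and R2: "rows V2 G2 \<subseteq> ?R" by (auto simp: rows_Un)
  have z1: "\<forall>r. r \<notin> rows V1 G1 \<longrightarrow> l1 r = 0" and z2: "\<forall>r. r \<notin> rows V2 G2 \<longrightarrow> l2 r = 0"
    using l1 l2 unfolding Dual_def by auto
  have "dobj ?R (\<lambda>r. l1 r + l2 r) = dobj ?R l1 + dobj ?R l2" by (rule dobj_add)
  also have "dobj ?R l1 = dobj (rows V1 G1) l1" using dobj_supp[OF fR R1 z1] .
  also have "dobj ?R l2 = dobj (rows V2 G2) l2" using dobj_supp[OF fR R2 z2] .
  finally show ?thesis .
qed

lemma glue_primal:
  assumes S1: "sys V1 G1" and S2: "sys V2 G2"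
    and z1: "z1 \<in> PLs V1 G1" and z2: "z2 \<in> PLs V2 G2"
    and agree: "\<And>m. m \<in> V1 \<Longrightarrow> m \<in> V2 \<Longrightarrow> z1 m = z2 m"
  shows "(\<lambda>m. if m \<in> V1 then z1 m else z2 m) \<in> PLs (V1 \<union> V2) (G1 \<union> G2)"
proof -
  let ?x = "\<lambda>m. if m \<in> V1 then z1 m else z2 m"
  have S: "sys (V1 \<union> V2) (G1 \<union> G2)" using sys_Un[OF S1 S2] .
  have fV: "finite (V1 \<union> V2)" using sys_fin[OF S] by auto
  show ?thesis unfolding PLs_def mem_Collect_eq
  proof (intro conjI allI impI ballI)
    fix m assume "m \<notin> V1 \<union> V2" then show "?x m = 0" using z2 unfolding PLs_def by auto
  next
    fix r assume "r \<in> rows (V1 \<union> V2) (G1 \<union> G2)"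
    then have "r \<in> rows V1 G1 \<or> r \<in> rows V2 G2" by (simp add: rows_Un)
    then show "act (V1 \<union> V2) r ?x \<le> rhs r"
    proof
      assume r: "r \<in> rows V1 G1"
      have "act (V1 \<union> V2) r ?x = act V1 r z1" using act_ext[OF S1 r _ fV] by auto
      then show ?thesis using z1 r unfolding PLs_def by auto
    next
      assume r: "r \<in> rows V2 G2"
      have "act (V1 \<union> V2) r ?x = act V2 r z2" using act_ext[OF S2 r _ fV] agree by auto
      then show ?thesis using z2 r unfolding PLs_def by auto
    qed
  qed
qed

lemma Q_glue0:
  assumes S1: "sys V1 G1" and S2: "sys V2 G2" and Q1: "Q V1 G1" and Q2: "Q V2 G2"
    and disj: "V1 \<inter> V2 = {}"
  shows "Q (V1 \<union> V2) (G1 \<union> G2)"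
  unfolding Q_def
proof (intro allI impI)
  fix w :: "monomial \<Rightarrow> real" assume wI: "\<forall>m\<in>V1 \<union> V2. w m \<in> \<int>"
  have wI1: "\<forall>m\<in>V1. w m \<in> \<int>" and wI2: "\<forall>m\<in>V2. w m \<in> \<int>" using wI by simp_all
  obtain x1 l1 where x1: "x1 \<in> PLs V1 G1" "\<forall>m\<in>V1. x1 m \<in> \<int>" and l1: "l1 \<in> Dual V1 G1 w"
    "\<forall>r. l1 r \<in> \<int>" and e1: "obj V1 w x1 = dobj (rows V1 G1) l1"
    using Q_D[OF Q1 wI1] by blast
  obtain x2 l2 where x2: "x2 \<in> PLs V2 G2" "\<forall>m\<in>V2. x2 m \<in> \<int>" and l2: "l2 \<in> Dual V2 G2 w"
    "\<forall>r. l2 r \<in> \<int>" and e2: "obj V2 w x2 = dobj (rows V2 G2) l2"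
    using Q_D[OF Q2 wI2] by blast
  let ?x = "\<lambda>m. if m \<in> V1 then x1 m else x2 m"
  have fV1: "finite V1" and fV2: "finite V2" using sys_fin S1 S2 by auto
  have nd: "\<And>m. m \<in> V1 \<Longrightarrow> m \<notin> V2" using disj by blast
  have "?x \<in> PLs (V1 \<union> V2) (G1 \<union> G2)" using glue_primal[OF S1 S2 x1(1) x2(1)] nd by blast
  moreover have "\<forall>m\<in>V1 \<union> V2. ?x m \<in> \<int>" using x1 x2 by auto
  moreover have "(\<lambda>r. l1 r + l2 r) \<in> Dual (V1 \<union> V2) (G1 \<union> G2) w"
  proof (rule glue_dual(1)[OF S1 S2 l1(1) l2(1)])
    fix m assume "m \<in> V1 \<union> V2" then show "w m = (if m \<in> V1 then w m else 0) + (if m \<in> V2 then w m else 0)"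
      using nd by (cases "m \<in> V1") auto
  qed
  moreover have "\<forall>r. l1 r + l2 r \<in> \<int>" using l1 l2 by auto
  moreover have "obj (V1 \<union> V2) w ?x = dobj (rows (V1 \<union> V2) (G1 \<union> G2)) (\<lambda>r. l1 r + l2 r)"
  proof -
    have "obj (V1 \<union> V2) w ?x = obj V1 w ?x + obj V2 w ?x"
      unfolding obj_def using fV1 fV2 disj by (rule sum.union_disjoint)
    also have "obj V1 w ?x = obj V1 w x1" unfolding obj_def by (intro sum.cong) auto
    also have "obj V2 w ?x = obj V2 w x2" unfolding obj_def using nd by (intro sum.cong) auto
    finally show ?thesis using e1 e2 glue_dobj[OF S1 S2 l1(1) l2(1)] by simp
  qed
  ultimately show "\<exists>x l. x \<in> PLs (V1 \<union> V2) (G1 \<union> G2) \<and> (\<forall>m\<in>V1 \<union> V2. x m \<in> \<int>) \<and>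
       l \<in> Dual (V1 \<union> V2) (G1 \<union> G2) w \<and> (\<forall>r. l r \<in> \<int>) \<and>
       obj (V1 \<union> V2) w x = dobj (rows (V1 \<union> V2) (G1 \<union> G2)) l" by blast
qed

lemma Q_glue1:
  assumes S1: "sys V1 G1" and S2: "sys V2 G2" and Q1: "Q V1 G1" and Q2: "Q V2 G2"
    and int: "V1 \<inter> V2 = {v}"
  shows "Q (V1 \<union> V2) (G1 \<union> G2)"
  unfolding Q_def
proof (intro allI impI)
  fix w :: "monomial \<Rightarrow> real" assume wI: "\<forall>m\<in>V1 \<union> V2. w m \<in> \<int>"
  have v1: "v \<in> V1" and v2: "v \<in> V2" using int by auto
  have wI1: "\<forall>m\<in>V1. w m \<in> \<int>" and wI2: "\<forall>m\<in>V2. w m \<in> \<int>" using wI by auto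
  have fV1: "finite V1" and fV2: "finite V2" using sys_fin S1 S2 by auto
  define A1 where "A1 = Aval V1 G1 v w"
  define A2 where "A2 = Aval V2 G2 v w"
  have A1I: "A1 0 \<in> \<int>" "A1 1 \<in> \<int>" unfolding A1_def using Aval_Int[OF S1 v1 _ wI1] by auto
  have A2I: "A2 0 \<in> \<int>" "A2 1 \<in> \<int>" unfolding A2_def using Aval_Int[OF S2 v2 _ wI2] by auto
  define a where "a = A2 1 + w v - A2 0"
  have aI: "a \<in> \<int>" unfolding a_def using A2I wI v1 by auto
  have bI: "w v - a \<in> \<int>" using aI wI v1 by auto
  obtain l1 where l1: "l1 \<in> Dual V1 G1 (w(v := a))" "\<forall>r. l1 r \<in> \<int>"
    "dobj (rows V1 G1) l1 = max (A1 0) (A1 1 + a)"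
    using Q_value[OF S1 Q1 v1 wI1 aI] unfolding A1_def by blast
  obtain l2 where l2: "l2 \<in> Dual V2 G2 (w(v := w v - a))" "\<forall>r. l2 r \<in> \<int>"
    "dobj (rows V2 G2) l2 = max (A2 0) (A2 1 + (w v - a))"
    using Q_value[OF S2 Q2 v2 wI2 bI] unfolding A2_def by blast
  have d2: "dobj (rows V2 G2) l2 = A2 0" using l2(3) unfolding a_def by simp
  define t :: real where "t = (if A1 1 + a \<le> A1 0 then 0 else 1)"
  have t01: "t = 0 \<or> t = 1" unfolding t_def by auto
  obtain z1 where z1: "z1 \<in> IP V1 G1" "z1 v = t" "obj (V1 - {v}) w z1 = A1 t"
    using Aval_props(1)[OF S1 v1 t01] unfolding A1_def by blast
  obtain z2 where z2: "z2 \<in> IP V2 G2" "z2 v = t" "obj (V2 - {v}) w z2 = A2 t"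
    using Aval_props(1)[OF S2 v2 t01] unfolding A2_def by blast
  let ?x = "\<lambda>m. if m \<in> V1 then z1 m else z2 m"
  let ?l = "\<lambda>r. l1 r + l2 r"
  have mv: "\<And>m. m \<in> V1 \<Longrightarrow> m \<in> V2 \<Longrightarrow> m = v" using int by blast
  have "?x \<in> PLs (V1 \<union> V2) (G1 \<union> G2)"
  proof (rule glue_primal[OF S1 S2])
    show "z1 \<in> PLs V1 G1" "z2 \<in> PLs V2 G2" using z1 z2 unfolding IP_def by auto
    fix m assume "m \<in> V1" "m \<in> V2" then show "z1 m = z2 m" using mv z1 z2 by metis
  qed
  moreover have "\<forall>m\<in>V1 \<union> V2. ?x m \<in> \<int>" using z1 z2 unfolding IP_def by auto
  moreover have "?l \<in> Dual (V1 \<union> V2) (G1 \<union> G2) w"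
  proof (rule glue_dual(1)[OF S1 S2 l1(1) l2(1)])
    fix m assume m: "m \<in> V1 \<union> V2"
    show "w m = (if m \<in> V1 then (w(v := a)) m else 0) + (if m \<in> V2 then (w(v := w v - a)) m else 0)"
    proof (cases "m = v")
      case True then show ?thesis using v1 v2 by simp
    next
      case False then show ?thesis using m mv by (cases "m \<in> V1") auto
    qed
  qed
  moreover have "\<forall>r. ?l r \<in> \<int>" using l1 l2 by auto
  moreover have "obj (V1 \<union> V2) w ?x = dobj (rows (V1 \<union> V2) (G1 \<union> G2)) ?l"
  proof -
    have eqU: "V1 \<union> V2 = V1 \<union> (V2 - {v})" using v1 by auto
    have dj: "V1 \<inter> (V2 - {v}) = {}" using int by auto
    have "obj (V1 \<union> V2) w ?x = obj V1 w ?x + obj (V2 - {v}) w ?x"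
      unfolding obj_def eqU using fV1 fV2 dj by (intro sum.union_disjoint) auto
    also have "obj V1 w ?x = obj V1 w z1" unfolding obj_def by (intro sum.cong) auto
    also have "obj (V2 - {v}) w ?x = obj (V2 - {v}) w z2" unfolding obj_def using mv by (intro sum.cong) auto
    also have "obj V1 w z1 = obj (V1 - {v}) w z1 + w v * z1 v" by (rule obj_split[OF fV1 v1])
    finally have o: "obj (V1 \<union> V2) w ?x = A1 t + w v * t + A2 t" using z1 z2 by simp
    have "dobj (rows (V1 \<union> V2) (G1 \<union> G2)) ?l = max (A1 0) (A1 1 + a) + A2 0"
      using glue_dobj[OF S1 S2 l1(1) l2(1)] l1(3) d2 by simp
    then show ?thesis using o unfolding t_def a_def by auto
  qed
  ultimately show "\<exists>x l. x \<in> PLs (V1 \<union> V2) (G1 \<union> G2) \<and> (\<forall>m\<in>V1 \<union> V2. x m \<in> \<int>) \<and>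
       l \<in> Dual (V1 \<union> V2) (G1 \<union> G2) w \<and> (\<forall>r. l r \<in> \<int>) \<and>
       obj (V1 \<union> V2) w x = dobj (rows (V1 \<union> V2) (G1 \<union> G2)) l" by blast
qed

end

lemma adj_mono: "adj G u v \<Longrightarrow> G \<subseteq> G' \<Longrightarrow> adj G' u v"
  unfolding adj_def by blast

lemma adj_sym: "adj G u v \<Longrightarrow> adj G v u"
  unfolding adj_def by blast

lemma adj_I1: "c \<in> G \<Longrightarrow> m \<in> c \<Longrightarrow> adj G (\<Union>c) m"
  unfolding adj_def by blast
lemma adj_I2: "c \<in> G \<Longrightarrow> m \<in> c \<Longrightarrow> adj G m (\<Union>c)"
  unfolding adj_def by blast

lemma has_cycle_mono: "has_cycle V G \<Longrightarrow> V \<subseteq> V' \<Longrightarrow> G \<subseteq> G' \<Longrightarrow> has_cycle V' G'"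
  unfolding has_cycle_def by (meson adj_mono order_trans)

lemma rtrancl_path:
  assumes "(u, v) \<in> E\<^sup>*"
  shows "\<exists>xs. xs \<noteq> [] \<and> hd xs = u \<and> last xs = v \<and> distinct xs \<and>
     (\<forall>i. Suc i < length xs \<longrightarrow> (xs!i, xs!Suc i) \<in> E) \<and> (\<forall>x\<in>set xs. (u, x) \<in> E\<^sup>*)"
  using assms
proof (induction rule: rtrancl_induct)
  case base
  then show ?case by (intro exI[of _ "[u]"]) auto
next
  case (step y z)
  then obtain xs where xs: "xs \<noteq> []" "hd xs = u" "last xs = y" "distinct xs"
    "\<forall>i. Suc i < length xs \<longrightarrow> (xs!i, xs!Suc i) \<in> E" "\<forall>x\<in>set xs. (u, x) \<in> E\<^sup>*" by blast
  show ?case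
  proof (cases "z \<in> set xs")
    case True
    then obtain k where k: "k < length xs" "xs!k = z" by (meson in_set_conv_nth)
    let ?ys = "take (Suc k) xs"
    have "?ys \<noteq> []" using xs(1) by simp
    moreover have "hd ?ys = u" using xs(1,2) by (simp add: hd_take)
    moreover have "last ?ys = z" using k by (simp add: take_Suc_conv_app_nth)
    moreover have "distinct ?ys" using xs(4) by simp
    moreover have "\<forall>i. Suc i < length ?ys \<longrightarrow> (?ys!i, ?ys!Suc i) \<in> E" using xs(5) by auto
    moreover have "\<forall>x\<in>set ?ys. (u, x) \<in> E\<^sup>*" using xs(6) by (meson in_set_takeD)
    ultimately show ?thesis by blast
  next
    case False
    let ?ys = "xs @ [z]"
    have "\<forall>i. Suc i < length ?ys \<longrightarrow> (?ys!i, ?ys!Suc i) \<in> E"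
    proof (intro allI impI)
      fix i assume i: "Suc i < length ?ys"
      show "(?ys!i, ?ys!Suc i) \<in> E"
      proof (cases "Suc i < length xs")
        case True then show ?thesis using xs(5) by (simp add: nth_append)
      next
        case False
        then have "i = length xs - 1" "Suc i = length xs" using i by auto
        then show ?thesis using xs(1,3) step(2) by (simp add: nth_append last_conv_nth)
      qed
    qed
    moreover have "\<forall>x\<in>set ?ys. (u, x) \<in> E\<^sup>*" using xs(6) step by auto
    ultimately show ?thesis using xs False by (intro exI[of _ ?ys]) auto
  qed
qed

context SL begin

definition Eadj :: "andc set \<Rightarrow> (monomial \<times> monomial) set" where
  "Eadj G = {(u, v). adj G u v}"

lemma sys_star: "sys V G \<Longrightarrow> c \<in> G \<Longrightarrow> c \<subseteq> V \<and> \<Union>c \<in> V"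
  unfolding sys_def by simp

lemma Eadj_reach:
  assumes "(m, x) \<in> (Eadj G)\<^sup>*"
  shows "x = m \<or> (\<exists>g\<in>G. x \<in> g \<or> x = \<Union>g)"
  using assms
proof (induction rule: rtrancl_induct)
  case base then show ?case by simp
next
  case (step y z)
  then have "adj G y z" unfolding Eadj_def by auto
  then show ?case unfolding adj_def by blast
qed

lemma cycle_from_path:
  assumes S: "sys V G" and gG: "g \<in> G"
    and top: "\<forall>g'\<in>G - {g}. \<Union>g \<notin> g' \<and> \<Union>g \<noteq> \<Union>g'"
    and m: "m \<in> g" and m': "m' \<in> g" and neq: "m \<noteq> m'"
    and path: "(m, m') \<in> (Eadj (G - {g}))\<^sup>*"
  shows "has_cycle V G"
proof -
  let ?p = "\<Union>g"
  obtain xs where xs: "xs \<noteq> []" "hd xs = m" "last xs = m'" "distinct xs"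
    "\<forall>i. Suc i < length xs \<longrightarrow> (xs!i, xs!Suc i) \<in> Eadj (G - {g})"
    "\<forall>x\<in>set xs. (m, x) \<in> (Eadj (G - {g}))\<^sup>*"
    using rtrancl_path[OF path] by blast
  have gC: "g \<in> C" using S gG unfolding sys_def by auto
  have pg: "?p \<notin> g" using C_notin[OF gC] .
  have gV: "g \<subseteq> V" "?p \<in> V" using S gG unfolding sys_def by auto
  have nodes: "\<And>x. x \<in> set xs \<Longrightarrow> x \<noteq> ?p \<and> x \<in> V"
  proof -
    fix x assume "x \<in> set xs"
    then have r: "(m, x) \<in> (Eadj (G - {g}))\<^sup>*" using xs(6) by simp
    have "x = m \<or> (\<exists>g'\<in>G - {g}. x \<in> g' \<or> x = \<Union>g')" using Eadj_reach[OF r] .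
    then show "x \<noteq> ?p \<and> x \<in> V"
    proof
      assume xm: "x = m"
      have "x \<noteq> ?p" using xm m pg by metis
      moreover have "x \<in> V" using xm m gV(1) by (metis subsetD)
      ultimately show ?thesis by simp
    next
      assume "\<exists>g'\<in>G - {g}. x \<in> g' \<or> x = \<Union>g'"
      then obtain g' where g': "g' \<in> G - {g}" "x \<in> g' \<or> x = \<Union>g'" by blast
      have g'G: "g' \<in> G" using g'(1) by simp
      have st: "g' \<subseteq> V" "\<Union>g' \<in> V" using sys_star[OF S g'G] by auto
      have tp: "?p \<notin> g'" "?p \<noteq> \<Union>g'" using top g'(1) by auto
      have "x \<noteq> ?p" using g'(2) tp by metis
      moreover have "x \<in> V" using g'(2) st by (metis subsetD)
      ultimately show ?thesis by simp
    qed
  qed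
  have len: "length xs \<ge> 2"
  proof (rule ccontr)
    assume "\<not> length xs \<ge> 2"
    moreover have "length xs \<ge> 1" using xs(1) by (simp add: Suc_leI)
    ultimately have "length xs = 1" by linarith
    then obtain a where "xs = [a]" by (metis One_nat_def length_0_conv length_Suc_conv)
    then show False using xs neq by simp
  qed
  let ?vs = "?p # xs"
  have "length ?vs \<ge> 3" using len by simp
  moreover have "distinct ?vs" using xs(4) nodes by auto
  moreover have "set ?vs \<subseteq> V" using nodes gV by auto
  moreover have "\<forall>i < length ?vs. adj G (?vs ! i) (?vs ! ((i + 1) mod length ?vs))"
  proof (intro allI impI)
    fix i assume i: "i < length ?vs"
    show "adj G (?vs ! i) (?vs ! ((i + 1) mod length ?vs))"
    proof (cases "i = 0")
      case True
      have "(i + 1) mod length ?vs = 1" using True len xs(1) by simp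
      then have "?vs ! ((i + 1) mod length ?vs) = xs ! 0" by simp
      also have "xs ! 0 = m" using xs(1,2) by (simp add: hd_conv_nth)
      finally show ?thesis using True adj_I1[OF gG m] by simp
    next
      case False
      show ?thesis
      proof (cases "i = length xs")
        case True
        have "?vs ! i = xs ! (length xs - 1)" using True False by (simp add: nth_Cons')
        also have "\<dots> = m'" using xs(1,3) by (simp add: last_conv_nth)
        finally have a: "?vs ! i = m'" .
        have b: "(i + 1) mod length ?vs = 0" using True by simp
        show ?thesis unfolding a b using adj_I2[OF gG m'] by simp
      next
        case False2: False
        then have si: "Suc (i - 1) < length xs" using i False by simp
        then have "(xs!(i-1), xs!Suc (i-1)) \<in> Eadj (G - {g})" using xs(5) by blast
        then have "adj (G - {g}) (xs!(i-1)) (xs!Suc (i-1))" unfolding Eadj_def by simp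
        then have "adj G (xs!(i-1)) (xs!Suc (i-1))" using adj_mono[of "G - {g}" _ _ G] by simp
        moreover have "?vs ! i = xs!(i-1)" using False by (simp add: nth_Cons')
        moreover have "(i + 1) mod length ?vs = Suc (i - 1) + 1"
          using False False2 i si by simp
        moreover have "?vs ! (Suc (i - 1) + 1) = xs ! Suc (i - 1)" by simp
        ultimately show ?thesis by simp
      qed
    qed
  qed
  ultimately show ?thesis unfolding has_cycle_def by blast
qed

end

context SL begin

lemma Q_acyclic:
  assumes "sys V G" "\<not> has_cycle V G"
  shows "Q V G"
  using assms
proof (induction "card G" arbitrary: V G rule: less_induct)
  case less
  note S = less.prems(1) and acyc = less.prems(2)
  have fV: "finite V" and fG: "finite G" using sys_fin[OF S] by auto
  have GC: "G \<subseteq> C" and VM: "V \<subseteq> M" using S unfolding sys_def by auto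
  show ?case
  proof (cases "G = {}")
    case True then show ?thesis using Q_empty[OF fV] by simp
  next
    case Gne: False
    have "Max ((\<lambda>c. card (\<Union>c)) ` G) \<in> (\<lambda>c. card (\<Union>c)) ` G" using fG Gne by (intro Max_in) auto
    then obtain g where gG: "g \<in> G" and gmax0: "card (\<Union>g) = Max ((\<lambda>c. card (\<Union>c)) ` G)" by auto
    have gmax: "\<And>g'. g' \<in> G \<Longrightarrow> card (\<Union>g') \<le> card (\<Union>g)" unfolding gmax0 using fG by simp
    have gC: "g \<in> C" using gG GC by auto
    define p where "p = \<Union>g"
    define G' where "G' = G - {g}"
    have top: "\<forall>g'\<in>G'. p \<notin> g' \<and> p \<noteq> \<Union>g'"
    proof
      fix g' assume g': "g' \<in> G'"
      then have g'G: "g' \<in> G" and ne: "g' \<noteq> g" unfolding G'_def by auto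
      have g'C: "g' \<in> C" using g'G GC by auto
      have "p \<notin> g'"
      proof
        assume "p \<in> g'"
        then have "card p < card (\<Union>g')" using C_card[OF g'C] by simp
        then show False using gmax[OF g'G] p_def by simp
      qed
      moreover have "p \<noteq> \<Union>g'" using C_inj[OF gC g'C] ne p_def by metis
      ultimately show "p \<notin> g' \<and> p \<noteq> \<Union>g'" by simp
    qed
    have top': "\<forall>g'\<in>G - {g}. \<Union>g \<notin> g' \<and> \<Union>g \<noteq> \<Union>g'" using top unfolding p_def G'_def .
    have pg: "p \<notin> g" using C_notin[OF gC] p_def by simp
    have gV: "g \<subseteq> V" "p \<in> V" using sys_star[OF S gG] p_def by auto
    have cardG': "card G' < card G" unfolding G'_def using fG gG by (meson card_Diff1_less)
    show ?thesis
    proof (cases "\<exists>m\<in>g. \<exists>g'\<in>G'. m \<in> g' \<or> m = \<Union>g'")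
      case True
      then obtain m g0 where m: "m \<in> g" and g0: "g0 \<in> G'" "m \<in> g0 \<or> m = \<Union>g0" by blast
      define K where "K = {x. (m, x) \<in> (Eadj G')\<^sup>*}"
      define GK where "GK = {g' \<in> G'. \<Union>g' \<in> K}"
      have mK: "m \<in> K" unfolding K_def by simp
      have Kclos: "\<And>x y. x \<in> K \<Longrightarrow> adj G' x y \<Longrightarrow> y \<in> K"
        unfolding K_def Eadj_def by (simp add: rtrancl.rtrancl_into_rtrancl)
      have Kreach: "\<And>x. x \<in> K \<Longrightarrow> x = m \<or> (\<exists>g'\<in>G'. x \<in> g' \<or> x = \<Union>g')"
        unfolding K_def using Eadj_reach by blast
      have KV: "K \<subseteq> V"
      proof
        fix x assume "x \<in> K"
        then have "x = m \<or> (\<exists>g'\<in>G'. x \<in> g' \<or> x = \<Union>g')" using Kreach by blast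
        then show "x \<in> V"
        proof
          assume "x = m" then show ?thesis using m gV by (metis subsetD)
        next
          assume "\<exists>g'\<in>G'. x \<in> g' \<or> x = \<Union>g'"
          then obtain g' where g': "g' \<in> G'" "x \<in> g' \<or> x = \<Union>g'" by blast
          have "g' \<in> G" using g' unfolding G'_def by simp
          then have "g' \<subseteq> V" "\<Union>g' \<in> V" using sys_star[OF S] by auto
          then show ?thesis using g'(2) by (metis subsetD)
        qed
      qed
      have pK: "p \<notin> K"
      proof
        assume "p \<in> K"
        then have "p = m \<or> (\<exists>g'\<in>G'. p \<in> g' \<or> p = \<Union>g')" using Kreach by blast
        then show False
        proof
          assume "p = m" then show False using m pg by simp
        next
          assume "\<exists>g'\<in>G'. p \<in> g' \<or> p = \<Union>g'"
          then show False using top by blast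
        qed
      qed
      have star_in: "\<And>g'. g' \<in> G' \<Longrightarrow> \<Union>g' \<in> K \<Longrightarrow> g' \<subseteq> K"
      proof
        fix g' y assume "g' \<in> G'" "\<Union>g' \<in> K" "y \<in> g'"
        then show "y \<in> K" using Kclos adj_I1 by blast
      qed
      have star_out: "\<And>g' y. g' \<in> G' \<Longrightarrow> y \<in> g' \<Longrightarrow> y \<in> K \<Longrightarrow> \<Union>g' \<in> K"
        using Kclos adj_I2 by blast
      have others: "\<And>y. y \<in> g \<Longrightarrow> y \<noteq> m \<Longrightarrow> y \<notin> K"
      proof
        fix y assume y: "y \<in> g" "y \<noteq> m" "y \<in> K"
        then have "(m, y) \<in> (Eadj (G - {g}))\<^sup>*" unfolding K_def G'_def by simp
        then have "has_cycle V G" using cycle_from_path[OF S gG top' m y(1)] y(2) by metis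
        then show False using acyc by simp
      qed
      define V1 where "V1 = K"
      define G1 where "G1 = GK"
      define V2 where "V2 = (V - K) \<union> {m}"
      define G2 where "G2 = G - GK"
      have GKsub: "GK \<subseteq> G'" unfolding GK_def by auto
      have S1: "sys V1 G1" unfolding sys_def V1_def G1_def
      proof (intro conjI ballI)
        show "K \<subseteq> M" using KV VM by auto
        show "GK \<subseteq> C" using GKsub GC unfolding G'_def by auto
        fix c assume c: "c \<in> GK"
        then have "c \<in> G'" "\<Union>c \<in> K" unfolding GK_def by auto
        then show "c \<subseteq> K" "\<Union>c \<in> K" using star_in by auto
      qed
      have S2a: "V2 \<subseteq> M" unfolding V2_def using VM m gV by auto
      have S2b: "G2 \<subseteq> C" unfolding G2_def using GC by auto
      have S2c: "\<forall>c\<in>G2. c \<subseteq> V2 \<and> \<Union>c \<in> V2"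
      proof
        fix c assume c: "c \<in> G2"
        show "c \<subseteq> V2 \<and> \<Union>c \<in> V2"
        proof (cases "c = g")
          case True
          have "\<Union>c \<in> V2" unfolding V2_def using True gV pK p_def by simp
          moreover have "c \<subseteq> V2"
          proof
            fix y assume "y \<in> c"
            then have yg: "y \<in> g" using True by simp
            show "y \<in> V2"
            proof (cases "y = m")
              case True then show ?thesis unfolding V2_def by simp
            next
              case False then show ?thesis unfolding V2_def using others[OF yg] yg gV by auto
            qed
          qed
          ultimately show ?thesis by simp
        next
          case False
          then have cG': "c \<in> G'" and cnK: "\<Union>c \<notin> K"
            using c unfolding G2_def G'_def GK_def by auto
          have cG: "c \<in> G" using cG' unfolding G'_def by simp
          have st: "c \<subseteq> V" "\<Union>c \<in> V" using sys_star[OF S cG] by auto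
          have "\<Union>c \<in> V2" unfolding V2_def using st cnK by simp
          moreover have "c \<subseteq> V2"
          proof
            fix y assume y: "y \<in> c"
            then have "y \<notin> K" using star_out[OF cG' y] cnK by blast
            then show "y \<in> V2" unfolding V2_def using st y by auto
          qed
          ultimately show ?thesis by simp
        qed
      qed
      have S2: "sys V2 G2" unfolding sys_def using S2a S2b S2c by blast
      have int: "V1 \<inter> V2 = {m}" unfolding V1_def V2_def using mK by auto
      have UV: "V1 \<union> V2 = V" unfolding V1_def V2_def using KV m gV by auto
      have UG: "G1 \<union> G2 = G" unfolding G1_def G2_def using GKsub unfolding G'_def by auto
      have c1: "card G1 < card G"
        unfolding G1_def using GKsub cardG' card_mono[OF _ GKsub] fG unfolding G'_def
        by (meson finite_Diff le_less_trans)
      have GKne: "GK \<noteq> {}"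
      proof -
        have "\<Union>g0 \<in> K"
        proof (cases "m = \<Union>g0")
          case True then show ?thesis using mK by simp
        next
          case False then have "m \<in> g0" using g0 by simp
          then show ?thesis using star_out[OF g0(1) _ mK] by simp
        qed
        then show ?thesis unfolding GK_def using g0 by blast
      qed
      have c2: "card G2 < card G"
      proof -
        have "GK \<subseteq> G" using GKsub unfolding G'_def by auto
        then have "G2 \<subset> G" unfolding G2_def using GKne by blast
        then show ?thesis using fG by (simp add: psubset_card_mono)
      qed
      have a1: "\<not> has_cycle V1 G1" using acyc has_cycle_mono UV UG by (metis Un_upper1)
      have a2: "\<not> has_cycle V2 G2" using acyc has_cycle_mono UV UG by (metis Un_upper2)
      have Q1: "Q V1 G1" using less.hyps[OF c1 S1 a1] .
      have Q2: "Q V2 G2" using less.hyps[OF c2 S2 a2] .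
      show ?thesis using Q_glue1[OF S1 S2 Q1 Q2 int] UV UG by simp
    next
      case False
      then have disj: "\<And>y g'. y \<in> g \<Longrightarrow> g' \<in> G' \<Longrightarrow> y \<notin> g' \<and> y \<noteq> \<Union>g'" by blast
      define V1 where "V1 = insert p g"
      define V2 where "V2 = V - insert p g"
      have S1: "sys V1 {g}" unfolding sys_def V1_def using gC gV VM p_def by auto
      have S2a: "V2 \<subseteq> M" unfolding V2_def using VM by auto
      have S2b: "G' \<subseteq> C" unfolding G'_def using GC by auto
      have S2c: "\<forall>c\<in>G'. c \<subseteq> V2 \<and> \<Union>c \<in> V2"
      proof
        fix c assume c: "c \<in> G'"
        have cG: "c \<in> G" using c unfolding G'_def by simp
        have st: "c \<subseteq> V" "\<Union>c \<in> V" using sys_star[OF S cG] by auto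
        have "\<Union>c \<notin> insert p g" using top c disj by blast
        moreover have "\<forall>y\<in>c. y \<notin> insert p g" using top c disj by blast
        ultimately show "c \<subseteq> V2 \<and> \<Union>c \<in> V2" unfolding V2_def using st by blast
      qed
      have S2: "sys V2 G'" unfolding sys_def using S2a S2b S2c by blast
      have Q1: "Q V1 {g}" unfolding V1_def p_def using Q_star[OF gC] .
      have a2: "\<not> has_cycle V2 G'" using acyc has_cycle_mono unfolding V2_def G'_def
        by (metis Diff_subset)
      have Q2: "Q V2 G'" using less.hyps[OF cardG' S2 a2] .
      have disj2: "V1 \<inter> V2 = {}" unfolding V1_def V2_def by auto
      have UV: "V1 \<union> V2 = V" unfolding V1_def V2_def using gV by auto
      have UG: "{g} \<union> G' = G" unfolding G'_def using gG by auto
      show ?thesis using Q_glue0[OF S1 S2 Q1 Q2 disj2] UV UG by simp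
    qed
  qed
qed

end

lemma act_lin: "act V r (\<lambda>m. a * y m + b * z m) = a * act V r y + b * act V r z"
  unfolding act_def by (simp add: algebra_simps sum.distrib sum_distrib_left)

lemma obj_lin: "obj V w (\<lambda>m. a * y m + b * z m) = a * obj V w y + b * obj V w z"
  unfolding obj_def by (simp add: algebra_simps sum.distrib sum_distrib_left)

lemma act_diff: "act V r (\<lambda>m. y m - z m) = act V r y - act V r z"
  unfolding act_def by (simp add: algebra_simps sum_subtractf)

lemma obj_diff: "obj V w (\<lambda>m. y m - z m) = obj V w y - obj V w z"
  unfolding obj_def by (simp add: algebra_simps sum_subtractf)

context SL begin

lemma sys_MC: "sys M C"
  unfolding sys_def using C_sub C_res by blast

lemma TDI_from_Q:
  assumes QM: "Q M C"
  shows "TDI M (rows M C) coef rhs"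
  unfolding TDI_def Let_def
proof (intro allI impI)
  fix w :: "monomial \<Rightarrow> real"
  assume wI: "\<forall>m\<in>M. w m \<in> \<int>"
  obtain x l where x: "x \<in> PLs M C" and l: "l \<in> Dual M C w" "\<forall>r. l r \<in> \<int>"
    and e: "obj M w x = dobj (rows M C) l"
    using Q_D[OF QM wI] by blast
  have Dset: "{lam. (\<forall>r. r \<notin> rows M C \<longrightarrow> lam r = 0) \<and> (\<forall>r\<in>rows M C. 0 \<le> lam r) \<and>
       (\<forall>m\<in>M. (\<Sum>r\<in>rows M C. lam r * coef r m) = w m)} = Dual M C w"
    unfolding Dual_def dsum_def by simp
  show "\<exists>lam\<in>{lam. (\<forall>r. r \<notin> rows M C \<longrightarrow> lam r = 0) \<and> (\<forall>r\<in>rows M C. 0 \<le> lam r) \<and>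
       (\<forall>m\<in>M. (\<Sum>r\<in>rows M C. lam r * coef r m) = w m)}.
       (\<forall>r\<in>rows M C. lam r \<in> \<int>) \<and>
       (\<forall>\<mu>\<in>{lam. (\<forall>r. r \<notin> rows M C \<longrightarrow> lam r = 0) \<and> (\<forall>r\<in>rows M C. 0 \<le> lam r) \<and>
       (\<forall>m\<in>M. (\<Sum>r\<in>rows M C. lam r * coef r m) = w m)}.
           (\<Sum>r\<in>rows M C. rhs r * lam r) \<le> (\<Sum>r\<in>rows M C. rhs r * \<mu> r))"
    unfolding Dset
  proof (intro bexI[of _ l] conjI ballI)
    fix r show "l r \<in> \<int>" using l by simp
  next
    fix \<mu> assume mu: "\<mu> \<in> Dual M C w"
    have "dobj (rows M C) l \<le> dobj (rows M C) \<mu>" using weak[OF sys_MC x mu] e by simp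
    then show "(\<Sum>r\<in>rows M C. rhs r * l r) \<le> (\<Sum>r\<in>rows M C. rhs r * \<mu> r)" unfolding dobj_def .
  next
    show "l \<in> Dual M C w" using l by simp
  qed
qed

lemma vertex_integral:
  assumes QM: "Q M C" and v: "vertex (PL M C) y"
  shows "\<forall>m\<in>M. y m \<in> \<int>"
proof -
  let ?R = "rows M C"
  have fR: "finite ?R" and fM: "finite M" using sys_fin[OF sys_MC] by auto
  have yP: "y \<in> PLs M C" using v unfolding vertex_def PL_eq by simp
  define T where "T = {r \<in> ?R. act M r y = rhs r}"
  have fT: "finite T" using fR unfolding T_def by simp
  define w where "w = (\<lambda>m. \<Sum>r\<in>T. coef r m)"
  have wI: "\<forall>m\<in>M. w m \<in> \<int>" unfolding w_def using coef_Int by (simp add: Ints_sum)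
  have objT: "\<And>z. obj M w z = (\<Sum>r\<in>T. act M r z)"
    unfolding obj_def w_def act_def by (simp add: sum_distrib_right) (rule sum.swap)
  have objle: "\<And>z. z \<in> PLs M C \<Longrightarrow> obj M w z \<le> (\<Sum>r\<in>T. rhs r)"
    unfolding objT using T_def unfolding PLs_def by (intro sum_mono) auto
  have objy: "obj M w y = (\<Sum>r\<in>T. rhs r)" unfolding objT T_def by simp
  obtain x l where x: "x \<in> PLs M C" "\<forall>m\<in>M. x m \<in> \<int>" and l: "l \<in> Dual M C w"
    and e: "obj M w x = dobj ?R l"
    using Q_D[OF QM wI] by blast
  have TR: "T \<subseteq> ?R" unfolding T_def by blast
  have le1: "obj M w y \<le> dobj ?R l" using weak[OF sys_MC yP l] .
  have le2: "obj M w x \<le> obj M w y" using objle[OF x(1)] objy by simp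
  have eqxy: "obj M w x = obj M w y" using le1 le2 e by linarith
  have sx: "(\<Sum>r\<in>T. act M r x) = (\<Sum>r\<in>T. rhs r)" using eqxy objT[of x] objy by simp
  have z0: "(\<Sum>r\<in>T. rhs r - act M r x) = 0" using sx by (simp add: sum_subtractf)
  have nn: "\<forall>r\<in>T. 0 \<le> rhs r - act M r x"
  proof
    fix r assume "r \<in> T"
    then have "r \<in> ?R" using TR by blast
    then have "act M r x \<le> rhs r" using x(1) unfolding PLs_def by blast
    then show "0 \<le> rhs r - act M r x" by simp
  qed
  have tx: "\<forall>r\<in>T. act M r x = rhs r" using z0 sum_nonneg_eq_0_iff[OF fT nn[rule_format]] by simp
  have xy: "x = y"
  proof (rule ccontr)
    assume ne: "x \<noteq> y"
    define d where "d = (\<lambda>m. x m - y m)"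
    obtain m0 where m0: "x m0 \<noteq> y m0" using ne by blast
    define Sl where "Sl = (\<lambda>r. (rhs r - act M r y) / (1 + \<bar>act M r d\<bar>)) ` (?R - T)"
    define eps where "eps = Min (insert 1 Sl)"
    have fSl: "finite Sl" unfolding Sl_def using fR by simp
    have Slpos: "\<forall>s\<in>Sl. 0 < s"
    proof
      fix s assume "s \<in> Sl"
      then obtain r where r: "r \<in> ?R - T" "s = (rhs r - act M r y) / (1 + \<bar>act M r d\<bar>)"
        unfolding Sl_def by blast
      have rR: "r \<in> ?R" using r(1) by blast
      have "act M r y \<le> rhs r" using rR yP unfolding PLs_def by blast
      moreover have "act M r y \<noteq> rhs r" using r(1) unfolding T_def by blast
      ultimately have "act M r y < rhs r" by simp
      then show "0 < s" using r(2) by (simp add: divide_pos_pos)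
    qed
    have epos: "0 < eps" unfolding eps_def using fSl Slpos by (simp add: Min_gr_iff)
    have ele1: "eps \<le> 1" unfolding eps_def using fSl by simp
    have eleS: "eps \<le> (rhs r - act M r y) / (1 + \<bar>act M r d\<bar>)" if rT: "r \<in> ?R - T" for r
    proof -
      have "(rhs r - act M r y) / (1 + \<bar>act M r d\<bar>) \<in> Sl" unfolding Sl_def using rT by blast
      then show ?thesis unfolding eps_def using fSl by (intro Min_le) auto
    qed
    define a where "a = (\<lambda>m. 1 * y m + eps * d m)"
    define b where "b = (\<lambda>m. 1 * y m + (- eps) * d m)"
    have dM: "\<And>m. m \<notin> M \<Longrightarrow> d m = 0" using x(1) yP unfolding d_def PLs_def by auto
    have aP: "a \<in> PL M C" unfolding PL_eq PLs_def mem_Collect_eq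
    proof (intro conjI allI impI ballI)
      fix m assume "m \<notin> M" then show "a m = 0" using yP dM unfolding a_def PLs_def by auto
    next
      fix r assume r: "r \<in> ?R"
      have "act M r a = act M r y + eps * act M r d" unfolding a_def act_lin by simp
      also have "act M r d = act M r x - act M r y" unfolding d_def act_diff by simp
      finally have "act M r a = (1 - eps) * act M r y + eps * act M r x" by (simp add: algebra_simps)
      also have "\<dots> \<le> (1 - eps) * rhs r + eps * rhs r"
        using r yP x(1) epos ele1 unfolding PLs_def
        by (intro add_mono mult_left_mono) auto
      finally show "act M r a \<le> rhs r" by (simp add: algebra_simps)
    qed
    have bP: "b \<in> PL M C" unfolding PL_eq PLs_def mem_Collect_eq
    proof (intro conjI allI impI ballI)
      fix m assume "m \<notin> M" then show "b m = 0" using yP dM unfolding b_def PLs_def by auto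
    next
      fix r assume r: "r \<in> ?R"
      have ab: "act M r b = act M r y - eps * act M r d" unfolding b_def act_lin by simp
      show "act M r b \<le> rhs r"
      proof (cases "r \<in> T")
        case True
        then have "act M r d = 0" unfolding d_def act_diff using tx T_def by simp
        then show ?thesis using ab True unfolding T_def by simp
      next
        case False
        then have rT: "r \<in> ?R - T" using r by simp
        have sl: "0 \<le> rhs r - act M r y" using r yP unfolding PLs_def by auto
        have "- eps * act M r d \<le> eps * \<bar>act M r d\<bar>" using epos by (simp add: abs_if)
        also have "\<dots> \<le> (rhs r - act M r y) / (1 + \<bar>act M r d\<bar>) * \<bar>act M r d\<bar>"
          using eleS[OF rT] by (intro mult_right_mono) auto
        also have "\<dots> \<le> rhs r - act M r y"
        proof -
          have "\<bar>act M r d\<bar> / (1 + \<bar>act M r d\<bar>) \<le> 1" by simp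
          then have "(rhs r - act M r y) * (\<bar>act M r d\<bar> / (1 + \<bar>act M r d\<bar>)) \<le> (rhs r - act M r y) * 1"
            using sl by (intro mult_left_mono) auto
          then show ?thesis by simp
        qed
        finally show ?thesis using ab by simp
      qed
    qed
    have yab: "y = (\<lambda>m. (1/2) * a m + (1 - 1/2) * b m)" unfolding a_def b_def
      by (rule ext) (simp add: algebra_simps)
    have vv: "\<forall>a\<in>PL M C. \<forall>b\<in>PL M C. \<forall>t::real. 0 < t \<and> t < 1 \<and> y = (\<lambda>m. t * a m + (1 - t) * b m) \<longrightarrow> a = b"
      using v unfolding vertex_def by (rule conjunct2)
    have h: "\<forall>t::real. 0 < t \<and> t < 1 \<and> y = (\<lambda>m. t * a m + (1 - t) * b m) \<longrightarrow> a = b"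
      using bspec[OF bspec[OF vv aP] bP] .
    have "a = b" using spec[OF h, of "1/2"] yab by simp
    then have "a m0 = b m0" by simp
    then have "eps * d m0 = 0" unfolding a_def b_def by simp
    then show False using epos m0 unfolding d_def by simp
  qed
  show ?thesis using x(2) xy by simp
qed

end

lemma conv_eq:
  fixes t a b y :: real
  assumes "0 < t" "t < 1" "a \<le> y" "b \<le> y" "t * a + (1 - t) * b = y"
  shows "a = y \<and> b = y"
proof -
  have h1: "0 \<le> t * (y - a)" using assms by simp
  have h2: "0 \<le> (1 - t) * (y - b)" using assms by simp
  have "t * (y - a) + (1 - t) * (y - b) = y - (t * a + (1 - t) * b)" by (simp add: algebra_simps)
  then have s0: "t * (y - a) + (1 - t) * (y - b) = 0" using assms(5) by simp
  then have "t * (y - a) = 0" "(1 - t) * (y - b) = 0" using h1 h2 by linarith+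
  then show ?thesis using assms(1,2) by simp
qed

context SL begin

lemma vertex_exists:
  assumes yP: "y \<in> PLs M C" and opt: "\<forall>y'\<in>PLs M C. obj M w y' \<le> obj M w y"
  shows "\<exists>v. vertex (PL M C) v \<and> obj M w v = obj M w y"
proof -
  let ?R = "rows M C"
  have fR: "finite ?R" and fM: "finite M" using sys_fin[OF sys_MC] by auto
  define tight where "tight = (\<lambda>z. {r \<in> ?R. act M r z = rhs r})"
  define S where "S = {z \<in> PLs M C. obj M w z = obj M w y}"
  define Pk where "Pk = (\<lambda>k. \<exists>z\<in>S. card (tight z) = k)"
  have "Pk (card (tight y))" unfolding Pk_def S_def using yP by blast
  moreover have "\<forall>k. Pk k \<longrightarrow> k \<le> card ?R"
  proof (intro allI impI)
    fix k assume "Pk k"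
    then obtain z where "card (tight z) = k" unfolding Pk_def by blast
    moreover have "tight z \<subseteq> ?R" unfolding tight_def by blast
    ultimately show "k \<le> card ?R" using card_mono[OF fR] by blast
  qed
  ultimately have "\<exists>x. Pk x \<and> (\<forall>k. Pk k \<longrightarrow> k \<le> x)" by (rule Nat.ex_has_greatest_nat)
  then obtain k0 where k0: "Pk k0" "\<forall>k. Pk k \<longrightarrow> k \<le> k0" by blast
  then obtain z0 where z0S: "z0 \<in> S" and cz0: "card (tight z0) = k0" unfolding Pk_def by blast
  have z0P: "z0 \<in> PLs M C" and z0o: "obj M w z0 = obj M w y" using z0S unfolding S_def by auto
  have "vertex (PL M C) z0"
    unfolding vertex_def PL_eq
  proof (intro conjI z0P ballI allI impI)
    fix a b and t :: real
    assume aP: "a \<in> PLs M C" and bP: "b \<in> PLs M C" and h: "0 < t \<and> t < 1 \<and> z0 = (\<lambda>m. t * a m + (1 - t) * b m)"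
    have t0: "0 < t" and t1: "t < 1" and z0eq: "z0 = (\<lambda>m. t * a m + (1 - t) * b m)" using h by auto
    show "a = b"
    proof (rule ccontr)
      assume ab: "a \<noteq> b"
      then obtain m0 where m0: "a m0 \<noteq> b m0" by blast
      have m0M: "m0 \<in> M"
      proof (rule ccontr)
        assume "m0 \<notin> M"
        then have "a m0 = 0" "b m0 = 0" using aP bP unfolding PLs_def by blast+
        then show False using m0 by simp
      qed
      have oa: "obj M w a \<le> obj M w y" and ob: "obj M w b \<le> obj M w y" using opt aP bP by auto
      have "obj M w z0 = t * obj M w a + (1 - t) * obj M w b" unfolding z0eq obj_lin by simp
      then have oab: "obj M w a = obj M w y" "obj M w b = obj M w y" using conv_eq[OF t0 t1 oa ob] z0o
        by auto
      have tab: "act M r a = act M r b" if r: "r \<in> tight z0" for r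
      proof -
        have rR: "r \<in> ?R" and eq: "act M r z0 = rhs r" using r unfolding tight_def by auto
        have "act M r a \<le> rhs r" "act M r b \<le> rhs r" using aP bP rR unfolding PLs_def by auto
        moreover have "act M r z0 = t * act M r a + (1 - t) * act M r b" unfolding z0eq act_lin by simp
        ultimately show ?thesis using eq conv_eq[OF t0 t1] by metis
      qed
      define e where "e = (if a m0 > b m0 then (\<lambda>m. a m - b m) else (\<lambda>m. b m - a m))"
      have em0: "e m0 > 0" unfolding e_def using m0 by auto
      have eM: "\<And>m. m \<notin> M \<Longrightarrow> e m = 0" using aP bP unfolding e_def PLs_def by auto
      have et: "\<And>r. r \<in> tight z0 \<Longrightarrow> act M r e = 0" unfolding e_def using tab by (auto simp: act_diff)
      have eo: "obj M w e = 0" unfolding e_def using oab by (auto simp: obj_diff)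
      define N where "N = {r \<in> ?R. act M r e > 0}"
      have UpN: "Up m0 \<in> N" unfolding N_def using m0M fM em0 by (auto simp: act_Up rows_def)
      have fN: "finite N" using fR unfolding N_def by simp
      define q where "q = (\<lambda>r. (rhs r - act M r z0) / act M r e)"
      define s where "s = Min (q ` N)"
      have "s \<in> q ` N" unfolding s_def using fN UpN by (intro Min_in) auto
      then obtain rs where rs: "rs \<in> N" "s = q rs" by blast
      have sle: "\<And>r. r \<in> N \<Longrightarrow> s \<le> q r" unfolding s_def using fN by simp
      have qnn: "\<And>r. r \<in> N \<Longrightarrow> 0 \<le> q r"
      proof -
        fix r assume r: "r \<in> N"
        then have "r \<in> ?R" "act M r e > 0" unfolding N_def by auto
        moreover have "act M r z0 \<le> rhs r" using z0P \<open>r \<in> ?R\<close> unfolding PLs_def by auto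
        ultimately show "0 \<le> q r" unfolding q_def by simp
      qed
      have snn: "0 \<le> s" using rs qnn by simp
      define z1 where "z1 = (\<lambda>m. 1 * z0 m + s * e m)"
      have actz1: "\<And>r. act M r z1 = act M r z0 + s * act M r e" unfolding z1_def act_lin by simp
      have z1P: "z1 \<in> PLs M C" unfolding PLs_def mem_Collect_eq
      proof (intro conjI allI impI ballI)
        fix m assume "m \<notin> M" then show "z1 m = 0" using z0P eM unfolding z1_def PLs_def by auto
      next
        fix r assume r: "r \<in> ?R"
        have base: "act M r z0 \<le> rhs r" using z0P r unfolding PLs_def by auto
        show "act M r z1 \<le> rhs r"
        proof (cases "act M r e > 0")
          case True
          then have "r \<in> N" unfolding N_def using r by simp
          then have "s \<le> (rhs r - act M r z0) / act M r e" using sle unfolding q_def by simp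
          then have "s * act M r e \<le> rhs r - act M r z0" using True by (simp add: pos_le_divide_eq)
          then show ?thesis unfolding actz1 by simp
        next
          case False
          then have "s * act M r e \<le> 0" using snn by (simp add: mult_nonneg_nonpos)
          then show ?thesis unfolding actz1 using base by simp
        qed
      qed
      have z1o: "obj M w z1 = obj M w y" unfolding z1_def obj_lin using eo z0o by simp
      have sub: "insert rs (tight z0) \<subseteq> tight z1"
      proof
        fix r assume "r \<in> insert rs (tight z0)"
        then show "r \<in> tight z1"
        proof
          assume rr: "r = rs"
          have rsR: "rs \<in> ?R" and pe: "act M rs e > 0" using rs unfolding N_def by auto
          have "act M rs z1 = rhs rs" unfolding actz1 rs(2) q_def using pe by simp
          then show ?thesis unfolding tight_def using rr rsR by simp
        next
          assume rt: "r \<in> tight z0"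
          then show ?thesis unfolding tight_def using et[OF rt] actz1 by auto
        qed
      qed
      have rsn: "rs \<notin> tight z0" using rs et unfolding N_def by force
      have "card (insert rs (tight z0)) \<le> card (tight z1)"
        using sub fR unfolding tight_def by (intro card_mono) auto
      moreover have "card (insert rs (tight z0)) = Suc k0"
        using rsn cz0 fR unfolding tight_def by simp
      moreover have "Pk (card (tight z1))" unfolding Pk_def S_def using z1P z1o by blast
      ultimately show False using k0(2) by fastforce
    qed
  qed
  then show ?thesis using z0o by blast
qed

end

definition pt :: "row \<Rightarrow> real \<Rightarrow> row \<Rightarrow> real" where
  "pt r0 v = (\<lambda>r. if r = r0 then v else 0)"

lemma dsum_pt: "finite R \<Longrightarrow> r0 \<in> R \<Longrightarrow> dsum R (pt r0 v) x = v * coef r0 x"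
proof -
  assume a: "finite R" "r0 \<in> R"
  have "dsum R (pt r0 v) x = (\<Sum>r\<in>R. if r = r0 then v * coef r0 x else 0)"
    unfolding dsum_def pt_def by (intro sum.cong) auto
  also have "\<dots> = v * coef r0 x" using a by (simp add: sum.delta')
  finally show ?thesis .
qed

lemma dsum_sum: "finite T \<Longrightarrow> dsum R (\<lambda>r. \<Sum>t\<in>T. f t r) x = (\<Sum>t\<in>T. dsum R (f t) x)"
  unfolding dsum_def by (simp add: sum_distrib_right) (rule sum.swap)

definition intdiff :: "real \<Rightarrow> real \<Rightarrow> bool" where
  "intdiff a b \<longleftrightarrow> a - b \<in> \<int>"

context SL begin

definition Ch :: "(monomial \<times> monomial) set" where
  "Ch = {(q, m). \<exists>c\<in>C. q = \<Union>c \<and> m \<in> c}"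

definition Anc :: "monomial \<Rightarrow> monomial set" where
  "Anc p = {q \<in> M. (q, p) \<in> Ch\<^sup>*}"

lemma Ch_card: "(q, m) \<in> Ch \<Longrightarrow> card m < card q"
  unfolding Ch_def using C_card by blast

lemma Ch_trancl_card: "(q, p) \<in> Ch\<^sup>+ \<Longrightarrow> card p < card q"
proof (induction rule: trancl_induct)
  case (base y) then show ?case using Ch_card by blast
next
  case (step y z) then show ?case using Ch_card by (meson less_trans)
qed

lemma Ch_rtrancl_card: "(q, p) \<in> Ch\<^sup>* \<Longrightarrow> q \<noteq> p \<Longrightarrow> card p < card q"
  using Ch_trancl_card rtrancl_eq_or_trancl by metis

lemma Anc_down:
  assumes cC: "c \<in> C" and q: "\<Union>c \<in> Anc p" and ne: "\<Union>c \<noteq> p"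
  shows "\<exists>m\<in>c. m \<in> Anc p"
proof -
  have "(\<Union>c, p) \<in> Ch\<^sup>*" using q unfolding Anc_def by simp
  then obtain m' where m': "(\<Union>c, m') \<in> Ch" "(m', p) \<in> Ch\<^sup>*" using ne
    by (metis converse_rtranclE)
  then obtain c' where c': "c' \<in> C" "\<Union>c = \<Union>c'" "m' \<in> c'" unfolding Ch_def by blast
  have "c' = c" using C_inj[OF c'(1) cC] c'(2) by simp
  then have "m' \<in> c" using c' by simp
  moreover have "m' \<in> M" using C_sub[OF cC] \<open>m' \<in> c\<close> by blast
  ultimately show ?thesis using m'(2) unfolding Anc_def by blast
qed

lemma Anc_up:
  assumes cC: "c \<in> C" and m: "m \<in> c" and mA: "m \<in> Anc p"
  shows "\<Union>c \<in> Anc p"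
proof -
  have "(\<Union>c, m) \<in> Ch" unfolding Ch_def using cC m by blast
  moreover have "(m, p) \<in> Ch\<^sup>*" using mA unfolding Anc_def by simp
  ultimately have "(\<Union>c, p) \<in> Ch\<^sup>*" by (rule converse_rtrancl_into_rtrancl)
  then show ?thesis unfolding Anc_def using C_res[OF cC] by simp
qed

lemma route:
  assumes RM: "R \<subseteq> M" and d0: "0 \<le> \<delta>" and d1: "\<delta> \<le> 1"
    and path: "(u, v) \<in> {(x, y). x \<in> R \<and> y \<in> R \<and> adj C x y}\<^sup>*"
  shows "\<exists>f. (\<forall>r. 0 \<le> f r) \<and> (\<forall>r. f r \<noteq> 0 \<longrightarrow> (\<exists>c m. r = Ord c m \<and> c \<in> C \<and> m \<in> c \<and> \<Union>c \<in> R \<and> m \<in> R)) \<and>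
     (\<forall>x. dsum (rows M C) f x - \<delta> * (ind (x = v) - ind (x = u)) \<in> \<int>)"
  using path
proof (induction rule: rtrancl_induct)
  case base
  show ?case by (intro exI[of _ "\<lambda>r. 0"]) (simp add: dsum_def)
next
  case (step v' v)
  obtain f where f0: "\<forall>r. 0 \<le> f r"
    and fs: "\<forall>r. f r \<noteq> 0 \<longrightarrow> (\<exists>c m. r = Ord c m \<and> c \<in> C \<and> m \<in> c \<and> \<Union>c \<in> R \<and> m \<in> R)"
    and fi: "\<forall>x. dsum (rows M C) f x - \<delta> * (ind (x = v') - ind (x = u)) \<in> \<int>"
    using step.IH by blast
  have vR: "v' \<in> R" "v \<in> R" and ad: "adj C v' v" using step.hyps(2) by auto
  obtain c m where cC: "c \<in> C" and mc: "m \<in> c" and cases: "(v' = \<Union>c \<and> v = m) \<or> (v' = m \<and> v = \<Union>c)"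
    using ad unfolding adj_def by blast
  have rowin: "Ord c m \<in> rows M C" unfolding rows_def using cC mc by blast
  have fR: "finite (rows M C)" using sys_fin[OF sys_MC] by simp
  define val where "val = (if v' = \<Union>c \<and> v = m then 1 - \<delta> else \<delta>)"
  define f' where "f' = (\<lambda>r. f r + pt (Ord c m) val r)"
  have "\<forall>r. 0 \<le> f' r" unfolding f'_def pt_def val_def using f0 d0 d1 by auto
  moreover have "\<forall>r. f' r \<noteq> 0 \<longrightarrow> (\<exists>c m. r = Ord c m \<and> c \<in> C \<and> m \<in> c \<and> \<Union>c \<in> R \<and> m \<in> R)"
  proof (intro allI impI)
    fix r assume "f' r \<noteq> 0"
    then have "f r \<noteq> 0 \<or> r = Ord c m" unfolding f'_def pt_def by (auto split: if_splits)
    then show "\<exists>c m. r = Ord c m \<and> c \<in> C \<and> m \<in> c \<and> \<Union>c \<in> R \<and> m \<in> R"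
    proof
      assume "f r \<noteq> 0" then show ?thesis using fs by blast
    next
      assume r: "r = Ord c m"
      have "\<Union>c \<in> R \<and> m \<in> R" using cases vR by metis
      then show ?thesis using r cC mc by blast
    qed
  qed
  moreover have "\<forall>x. dsum (rows M C) f' x - \<delta> * (ind (x = v) - ind (x = u)) \<in> \<int>"
  proof
    fix x
    have ds: "dsum (rows M C) f' x = dsum (rows M C) f x + val * coef (Ord c m) x"
      unfolding f'_def dsum_add dsum_pt[OF fR rowin] by simp
    have fx: "dsum (rows M C) f x - \<delta> * (ind (x = v') - ind (x = u)) \<in> \<int>" using fi by blast
    show "dsum (rows M C) f' x - \<delta> * (ind (x = v) - ind (x = u)) \<in> \<int>"
    proof (cases "v' = \<Union>c \<and> v = m")
      case True
      then have "dsum (rows M C) f' x - \<delta> * (ind (x = v) - ind (x = u)) =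
          (dsum (rows M C) f x - \<delta> * (ind (x = v') - ind (x = u))) + (ind (x = v') - ind (x = v))"
        unfolding ds val_def by (simp add: algebra_simps)
      moreover have "ind (x = v') - ind (x = v) \<in> \<int>" by (simp add: ind_def)
      ultimately show ?thesis using fx by simp
    next
      case False
      then have vv: "v' = m" "v = \<Union>c" using cases by auto
      have "dsum (rows M C) f' x - \<delta> * (ind (x = v) - ind (x = u)) =
          dsum (rows M C) f x - \<delta> * (ind (x = v') - ind (x = u))"
        unfolding ds val_def using False vv by (simp add: algebra_simps)
      then show ?thesis using fx by simp
    qed
  qed
  ultimately show ?case by blast
qed

end

context SL begin

lemma cert:
  assumes gC: "g \<in> C" and ag: "a \<in> g" and bg: "b \<in> g" and ab: "a \<noteq> b"
    and conn: "(a, b) \<in> {(u, v). u \<in> M - Anc (\<Union>g) \<and> v \<in> M - Anc (\<Union>g) \<and> adj C u v}\<^sup>*"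
  shows "\<exists>w y \<mu>. (\<forall>m\<in>M. w m \<in> \<int>) \<and> y \<in> PLs M C \<and> \<mu> \<in> Dual M C w \<and>
     obj M w y = dobj (rows M C) \<mu> \<and> obj M w y \<notin> \<int>"
proof -
  define p where "p = \<Union>g"
  define A where "A = Anc p"
  define E0 where "E0 = {(u, v). u \<in> M - A \<and> v \<in> M - A \<and> adj C u v}"
  define K where "K = {x. (a, x) \<in> E0\<^sup>*}"
  define I where "I = \<Union>K"
  define R where "R = {m \<in> M. m \<notin> A \<and> m \<inter> I \<noteq> {}}"
  define T where "T = {t \<in> g. t \<inter> I \<noteq> {}}"
  define j where "j = card T"
  define ER where "ER = {(x, y). x \<in> R \<and> y \<in> R \<and> adj C x y}"
  define y where "y = (\<lambda>m. if m \<notin> M then 0 else if m \<in> A then 0 else if m \<in> R then 1 - 1 / real j else (1::real))"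
  have fM: "finite M" and fR: "finite (rows M C)" using sys_fin[OF sys_MC] by auto
  have gM: "g \<subseteq> M" using C_sub[OF gC] .
  have fg: "finite g" using C_fin[OF gC] .
  have pM: "p \<in> M" unfolding p_def using C_res[OF gC] .
  have pA: "p \<in> A" unfolding A_def Anc_def using pM by simp
  have gA: "\<And>t. t \<in> g \<Longrightarrow> t \<notin> A"
  proof
    fix t assume t: "t \<in> g" "t \<in> A"
    have "card t < card p" unfolding p_def using C_card[OF gC t(1)] .
    moreover have "(t, p) \<in> Ch\<^sup>*" using t(2) unfolding A_def Anc_def by simp
    ultimately show False using Ch_rtrancl_card by fastforce
  qed
  have KMA: "\<And>x. x \<in> K \<Longrightarrow> x \<in> M - A"
  proof -
    fix x assume "x \<in> K"
    then have "(a, x) \<in> E0\<^sup>*" unfolding K_def by simp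
    then show "x \<in> M - A"
    proof (induction rule: rtrancl_induct)
      case base then show ?case using ag gM gA by blast
    next
      case (step x z) then show ?case unfolding E0_def by blast
    qed
  qed
  have KR: "\<And>x. x \<in> K \<Longrightarrow> x \<in> R"
  proof -
    fix x assume xK: "x \<in> K"
    have "x \<in> M - A" using KMA[OF xK] .
    moreover have "x \<noteq> {}" using M_ne \<open>x \<in> M - A\<close> by blast
    moreover have "x \<subseteq> I" unfolding I_def using xK by blast
    ultimately show "x \<in> R" unfolding R_def by blast
  qed
  have aK: "a \<in> K" unfolding K_def by simp
  have bK: "b \<in> K" unfolding K_def E0_def A_def p_def using conn by simp
  have TR: "T \<subseteq> R" unfolding T_def R_def using gM gA by blast
  have aT: "a \<in> T" and bT: "b \<in> T" using KR[OF aK] KR[OF bK] ag bg unfolding T_def R_def by auto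
  have gRT: "\<And>m. m \<in> g \<Longrightarrow> m \<in> R \<Longrightarrow> m \<in> T" unfolding T_def R_def by blast
  have fT: "finite T" unfolding T_def using fg by simp
  have j2: "j \<ge> 2"
  proof -
    have "card {a, b} \<le> card T" using aT bT fT by (intro card_mono) auto
    then show ?thesis unfolding j_def using ab by simp
  qed
  have jpos: "real j > 0" using j2 by simp
  have yR: "\<And>m. m \<in> R \<Longrightarrow> y m = 1 - 1 / real j" unfolding y_def R_def by auto
  have yA: "\<And>m. m \<in> A \<Longrightarrow> y m = 0" unfolding y_def by auto
  have yO: "\<And>m. m \<in> M \<Longrightarrow> m \<notin> A \<Longrightarrow> m \<notin> R \<Longrightarrow> y m = 1" unfolding y_def by auto
  have RA: "\<And>m. m \<in> R \<Longrightarrow> m \<notin> A" and RM: "\<And>m. m \<in> R \<Longrightarrow> m \<in> M" unfolding R_def by auto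
  have y01: "\<And>m. 0 \<le> y m \<and> y m \<le> 1" unfolding y_def using jpos by auto
  have yRn: "y m \<noteq> 0 \<and> y m \<noteq> 1" if mR: "m \<in> R" for m
  proof -
    have "1 / real j < 1" "0 < 1 / real j" using j2 by auto
    then show ?thesis using yR[OF mR] by auto
  qed
  have Mup: "\<And>c m. c \<in> C \<Longrightarrow> m \<in> c \<Longrightarrow> \<Union>c \<notin> A \<Longrightarrow> m \<notin> A"
    unfolding A_def using Anc_up by blast
  have yP: "y \<in> PLs M C" unfolding PLs_def mem_Collect_eq
  proof (intro conjI allI impI ballI)
    fix m assume "m \<notin> M" then show "y m = 0" by (simp add: y_def)
  next
    fix r assume r: "r \<in> rows M C"
    show "act M r y \<le> rhs r"
    proof (cases r)
      case (Lo x)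
      then have "x \<in> M" using r unfolding rows_def by blast
      then show ?thesis using Lo fM y01 by (simp add: act_Lo)
    next
      case (Up x)
      then have "x \<in> M" using r unfolding rows_def by blast
      then show ?thesis using Up fM y01 by (simp add: act_Up)
    next
      case (Ord c m)
      then have cC: "c \<in> C" and mc: "m \<in> c" using r unfolding rows_def by blast+
      have qM: "\<Union>c \<in> M" using C_res[OF cC] .
      have mM: "m \<in> M" using C_sub[OF cC] mc by blast
      have "y (\<Union>c) \<le> y m"
      proof (cases "\<Union>c \<in> A")
        case True then show ?thesis using yA y01 by simp
      next
        case qA: False
        then have mA: "m \<notin> A" using Mup[OF cC mc] by simp
        show ?thesis
        proof (cases "\<Union>c \<in> R")
          case True
          then show ?thesis using yR mA mM yO[OF mM mA] by (cases "m \<in> R") auto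
        next
          case False
          have "m \<notin> R"
          proof
            assume "m \<in> R"
            then have "m \<inter> I \<noteq> {}" unfolding R_def by blast
            moreover have "m \<subseteq> \<Union>c" using mc by blast
            ultimately have "\<Union>c \<inter> I \<noteq> {}" by blast
            then show False using False qA qM unfolding R_def by blast
          qed
          then show ?thesis using yO[OF qM qA False] yO[OF mM mA] by simp
        qed
      qed
      then show ?thesis using Ord fM qM mM by (simp add: act_Ord)
    next
      case (Sm c)
      then have cC: "c \<in> C" using r unfolding rows_def by blast
      have qM: "\<Union>c \<in> M" using C_res[OF cC] .
      have cM: "c \<subseteq> M" using C_sub[OF cC] .
      have fc: "finite c" using C_fin[OF cC] .
      have nn: "\<And>m. 0 \<le> 1 - y m" using y01 by simp
      have key: "1 - y (\<Union>c) \<le> (\<Sum>m\<in>c. 1 - y m)"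
      proof (cases "\<Union>c = p")
        case True
        then have cg: "c = g" using C_inj[OF cC gC] p_def by simp
        have "(\<Sum>m\<in>T. 1 - y m) \<le> (\<Sum>m\<in>c. 1 - y m)"
          using fc nn cg unfolding T_def by (intro sum_mono2) auto
        moreover have "(\<Sum>m\<in>T. 1 - y m) = real j * (1 / real j)"
        proof -
          have "(\<Sum>m\<in>T. 1 - y m) = (\<Sum>m\<in>T. 1 / real j)"
            using yR TR by (intro sum.cong) auto
          then show ?thesis unfolding j_def by simp
        qed
        moreover have "1 - y (\<Union>c) = 1" using True yA pA by simp
        ultimately show ?thesis using jpos by simp
      next
        case qp: False
        have single: "1 - y (\<Union>c) \<le> (\<Sum>m\<in>c. 1 - y m)" if mc: "m \<in> c" and le: "y m \<le> y (\<Union>c)" for m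
        proof -
          have "1 - y m \<le> (\<Sum>m\<in>c. 1 - y m)" using fc mc nn by (intro member_le_sum) auto
          then show ?thesis using le by simp
        qed
        show ?thesis
        proof (cases "\<Union>c \<in> A")
          case True
          obtain m where "m \<in> c" "m \<in> A" using Anc_down[OF cC] True qp unfolding A_def by blast
          then show ?thesis using single yA True by simp
        next
          case qA: False
          show ?thesis
          proof (cases "\<Union>c \<in> R")
            case True
            then obtain i where i: "i \<in> \<Union>c" "i \<in> I" unfolding R_def by blast
            then obtain m where mc: "m \<in> c" and im: "i \<in> m" by blast
            have mM: "m \<in> M" using cM mc by blast
            have mA: "m \<notin> A" using Mup[OF cC mc qA] .
            have "m \<in> R" unfolding R_def using mM mA i im by blast
            then show ?thesis using single[OF mc] yR True by simp
          next
            case False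
            then have "y (\<Union>c) = 1" using yO qM qA by simp
            then show ?thesis using nn fc by (simp add: sum_nonneg)
          qed
        qed
      qed
      have "act M r y = (\<Sum>m\<in>c. y m) - y (\<Union>c)" using Sm fM cM qM by (simp add: act_Sm)
      moreover have "(\<Sum>m\<in>c. 1 - y m) = real (card c) - (\<Sum>m\<in>c. y m)"
        by (simp add: sum_subtractf)
      ultimately show ?thesis using key Sm by simp
    qed
  qed
  have ERsym: "\<And>u v. (u, v) \<in> ER\<^sup>* \<Longrightarrow> (v, u) \<in> ER\<^sup>*"
  proof -
    have cv: "ER\<inverse> = ER" unfolding ER_def using adj_sym by blast
    fix u v assume "(u, v) \<in> ER\<^sup>*"
    then have "(v, u) \<in> (ER\<inverse>)\<^sup>*" by (simp add: rtrancl_converse)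
    then show "(v, u) \<in> ER\<^sup>*" using cv by simp
  qed
  have chain: "\<And>n m. card m = n \<Longrightarrow> m \<in> M \<Longrightarrow> m \<notin> A \<Longrightarrow> i \<in> m \<Longrightarrow> i \<in> I \<Longrightarrow> (m, {i}) \<in> ER\<^sup>*" for i
  proof -
    fix n show "\<And>m. card m = n \<Longrightarrow> m \<in> M \<Longrightarrow> m \<notin> A \<Longrightarrow> i \<in> m \<Longrightarrow> i \<in> I \<Longrightarrow> (m, {i}) \<in> ER\<^sup>*"
    proof (induction n rule: less_induct)
      case (less n m)
      have mR: "m \<in> R" unfolding R_def using less.prems by blast
      show ?case
      proof (cases "m = {i}")
        case True then show ?thesis by simp
      next
        case False
        have "\<exists>c\<in>C. \<Union>c = m"
        proof -
          have "(\<exists>i'. m = {i'}) \<or> (\<exists>c\<in>C. \<Union>c = m)" using M_dec less.prems(2) by blast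
          moreover have "\<not> (\<exists>i'. m = {i'})" using False less.prems(4) by blast
          ultimately show ?thesis by blast
        qed
        then obtain c where cC: "c \<in> C" and cm: "\<Union>c = m" by blast
        obtain m' where m'c: "m' \<in> c" and im': "i \<in> m'" using less.prems(4) cm by blast
        have m'M: "m' \<in> M" using C_sub[OF cC] m'c by blast
        have m'A: "m' \<notin> A" using Mup[OF cC m'c] cm less.prems(3) by simp
        have cd: "card m' < n" using C_card[OF cC m'c] cm less.prems(1) by simp
        have IH: "(m', {i}) \<in> ER\<^sup>*" using less.IH[OF cd refl m'M m'A im' less.prems(5)] .
        have m'R: "m' \<in> R" unfolding R_def using m'M m'A im' less.prems(5) by blast
        have "adj C m m'" using adj_I1[OF cC m'c] cm by simp
        then have "(m, m') \<in> ER" unfolding ER_def using mR m'R by simp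
        then show ?thesis using IH by (rule converse_rtrancl_into_rtrancl)
      qed
    qed
  qed
  have KER: "\<And>x. (a, x) \<in> E0\<^sup>* \<Longrightarrow> (a, x) \<in> ER\<^sup>*"
  proof -
    fix x assume "(a, x) \<in> E0\<^sup>*"
    then show "(a, x) \<in> ER\<^sup>*"
    proof (induction rule: rtrancl_induct)
      case base then show ?case by simp
    next
      case (step x z)
      have "x \<in> K" "z \<in> K" unfolding K_def using step by auto
      then have "x \<in> R" "z \<in> R" using KR by auto
      moreover have "adj C x z" using step(2) unfolding E0_def by simp
      ultimately have "(x, z) \<in> ER" unfolding ER_def by simp
      then show ?case using step(3) by simp
    qed
  qed
  have connT: "\<And>t. t \<in> T \<Longrightarrow> (t, a) \<in> ER\<^sup>*"
  proof -
    fix t assume tT: "t \<in> T"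
    then obtain i where it: "i \<in> t" and iI: "i \<in> I" unfolding T_def by blast
    then obtain k where kK: "k \<in> K" and ik: "i \<in> k" unfolding I_def by blast
    have tg: "t \<in> g" using tT unfolding T_def by simp
    have c1: "(t, {i}) \<in> ER\<^sup>*" using chain[OF refl] tg gM gA it iI by blast
    have kMA: "k \<in> M - A" using KMA[OF kK] .
    have c2: "(k, {i}) \<in> ER\<^sup>*" using chain[OF refl] kMA ik iI by blast
    have c3: "(a, k) \<in> ER\<^sup>*" using KER kK unfolding K_def by simp
    show "(t, a) \<in> ER\<^sup>*" using c1 ERsym[OF c2] ERsym[OF c3] by (meson rtrancl_trans)
  qed
  define \<delta> where "\<delta> = 1 / real j"
  have d0: "0 \<le> \<delta>" and d1: "\<delta> \<le> 1" unfolding \<delta>_def using j2 by auto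
  have RsubM: "R \<subseteq> M" unfolding R_def by blast
  define OrdR where "OrdR = (\<lambda>r. \<exists>c m. r = Ord c m \<and> c \<in> C \<and> m \<in> c \<and> \<Union>c \<in> R \<and> m \<in> R)"
  have "\<forall>t\<in>T. \<exists>f. (\<forall>r. 0 \<le> f r) \<and> (\<forall>r. f r \<noteq> 0 \<longrightarrow> OrdR r) \<and>
     (\<forall>x. dsum (rows M C) f x - \<delta> * (ind (x = a) - ind (x = t)) \<in> \<int>)"
  proof
    fix t assume "t \<in> T"
    then have "(t, a) \<in> ER\<^sup>*" using connT by simp
    then show "\<exists>f. (\<forall>r. 0 \<le> f r) \<and> (\<forall>r. f r \<noteq> 0 \<longrightarrow> OrdR r) \<and>
     (\<forall>x. dsum (rows M C) f x - \<delta> * (ind (x = a) - ind (x = t)) \<in> \<int>)"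
      using route[OF RsubM d0 d1] unfolding ER_def OrdR_def by blast
  qed
  then obtain F where F0: "\<And>t r. t \<in> T \<Longrightarrow> 0 \<le> F t r"
    and Fs: "\<And>t r. t \<in> T \<Longrightarrow> F t r \<noteq> 0 \<Longrightarrow> OrdR r"
    and Fi: "\<And>t x. t \<in> T \<Longrightarrow> dsum (rows M C) (F t) x - \<delta> * (ind (x = a) - ind (x = t)) \<in> \<int>"
    by metis
  define FS where "FS = (\<lambda>r. \<Sum>t\<in>T. F t r)"
  have FS0: "\<And>r. 0 \<le> FS r" unfolding FS_def using F0 by (simp add: sum_nonneg)
  have FSs: "\<And>r. FS r \<noteq> 0 \<Longrightarrow> OrdR r"
  proof -
    fix r assume "FS r \<noteq> 0"
    then obtain t where "t \<in> T" "F t r \<noteq> 0" unfolding FS_def by (meson sum.neutral)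
    then show "OrdR r" using Fs by blast
  qed
  define mu0 where "mu0 = (\<lambda>r. FS r + pt (Sm g) \<delta> r)"
  have Sgrow: "Sm g \<in> rows M C" unfolding rows_def using gC by blast
  define w0 where "w0 = (\<lambda>x. dsum (rows M C) mu0 x)"
  have w0eq: "\<And>x. w0 x = (\<Sum>t\<in>T. dsum (rows M C) (F t) x) + \<delta> * coef (Sm g) x"
    unfolding w0_def mu0_def dsum_add FS_def dsum_sum[OF fT] dsum_pt[OF fR Sgrow] by simp
  have w0R: "\<And>x. x \<in> R \<Longrightarrow> w0 x \<in> \<int>"
  proof -
    fix x assume xR: "x \<in> R"
    define Z where "Z = (\<Sum>t\<in>T. dsum (rows M C) (F t) x - \<delta> * (ind (x = a) - ind (x = t)))"
    have ZI: "Z \<in> \<int>" unfolding Z_def using Fi by (intro Ints_sum) simp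
    have s1: "(\<Sum>t\<in>T. dsum (rows M C) (F t) x) = Z + (\<Sum>t\<in>T. \<delta> * (ind (x = a) - ind (x = t)))"
      unfolding Z_def by (simp add: sum.distrib[symmetric])
    have s2: "(\<Sum>t\<in>T. \<delta> * (ind (x = a) - ind (x = t))) = \<delta> * real j * ind (x = a) - \<delta> * ind (x \<in> T)"
    proof -
      have "(\<Sum>t\<in>T. \<delta> * (ind (x = a) - ind (x = t))) = (\<Sum>t\<in>T. \<delta> * ind (x = a)) - (\<Sum>t\<in>T. \<delta> * ind (x = t))"
        by (simp add: right_diff_distrib sum_subtractf)
      also have "(\<Sum>t\<in>T. \<delta> * ind (x = t)) = \<delta> * ind (x \<in> T)"
        using sum_ind_eq2[OF fT, of "\<lambda>_. \<delta>" x] by (simp add: ind_def)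
      finally show ?thesis unfolding j_def by simp
    qed
    have xp: "x \<noteq> p" using xR RA pA by metis
    have xg: "ind (x \<in> g) = ind (x \<in> T)" using xR gRT T_def by (auto simp: ind_def)
    have cS: "coef (Sm g) x = ind (x \<in> T)" using xg xp p_def by (simp add: ind_def)
    have "w0 x = Z + \<delta> * real j * ind (x = a)"
      unfolding w0eq s1 s2 cS by simp
    also have "\<delta> * real j = 1" unfolding \<delta>_def using jpos by simp
    finally have "w0 x = Z + ind (x = a)" by simp
    then show "w0 x \<in> \<int>" using ZI by (simp add: ind_def)
  qed
  define rho where "rho = (\<lambda>r. case r of
      Lo m \<Rightarrow> if m \<in> M \<and> y m = 0 then w0 m - of_int \<lfloor>w0 m\<rfloor> else 0
    | Up m \<Rightarrow> if m \<in> M \<and> y m = 1 then of_int \<lceil>w0 m\<rceil> - w0 m else 0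
    | _ \<Rightarrow> (0::real))"
  define mu where "mu = (\<lambda>r. mu0 r + rho r)"
  define w where "w = (\<lambda>x. dsum (rows M C) mu x)"
  have fC: "\<forall>c\<in>C. finite c" using C_fin by blast
  have wx: "\<And>x. x \<in> M \<Longrightarrow> w x = w0 x - rho (Lo x) + rho (Up x)"
  proof -
    fix x assume xM: "x \<in> M"
    have "dsum (rows M C) rho x = - rho (Lo x) + rho (Up x)"
      using dsum_formula[OF fM finC fC xM, of rho] by (simp add: rho_def)
    then show "w x = w0 x - rho (Lo x) + rho (Up x)" unfolding w_def mu_def dsum_add w0_def by simp
  qed
  have yMR: "\<And>x. x \<in> M \<Longrightarrow> y x \<noteq> 0 \<Longrightarrow> y x \<noteq> 1 \<Longrightarrow> x \<in> R"
    using yA yO by metis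
  have wI: "\<forall>m\<in>M. w m \<in> \<int>"
  proof
    fix x assume xM: "x \<in> M"
    show "w x \<in> \<int>"
    proof (cases "y x = 0")
      case True then show ?thesis using wx[OF xM] xM by (simp add: rho_def)
    next
      case F0: False
      show ?thesis
      proof (cases "y x = 1")
        case True then show ?thesis using wx[OF xM] xM by (simp add: rho_def)
      next
        case False
        then show ?thesis using wx[OF xM] F0 w0R[OF yMR[OF xM F0 False]] by (simp add: rho_def)
      qed
    qed
  qed
  have OrdR_row: "\<And>r. OrdR r \<Longrightarrow> r \<in> rows M C" unfolding OrdR_def rows_def by blast
  have muD: "mu \<in> Dual M C w" unfolding Dual_def mem_Collect_eq
  proof (intro conjI allI impI ballI)
    fix r assume r: "r \<notin> rows M C"
    have "FS r = 0" using FSs OrdR_row r by blast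
    moreover have "pt (Sm g) \<delta> r = 0" using r Sgrow unfolding pt_def by auto
    moreover have "rho r = 0" using r unfolding rho_def rows_def by (cases r) auto
    ultimately show "mu r = 0" unfolding mu_def mu0_def by simp
  next
    fix r assume "r \<in> rows M C"
    have "0 \<le> rho r" unfolding rho_def by (cases r) (auto simp: le_of_int_ceiling)
    moreover have "0 \<le> pt (Sm g) \<delta> r" unfolding pt_def using d0 by simp
    ultimately show "0 \<le> mu r" unfolding mu_def mu0_def using FS0 by (simp add: add_nonneg_nonneg)
  next
    fix m assume "m \<in> M" then show "dsum (rows M C) mu m = w m" unfolding w_def by simp
  qed
  have OrdR_Ord: "\<And>r. OrdR r \<Longrightarrow> \<exists>c m. r = Ord c m \<and> c \<in> C \<and> m \<in> c \<and> \<Union>c \<in> R \<and> m \<in> R"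
    unfolding OrdR_def by blast
  have FS_notOrd: "\<And>r. (\<forall>c m. r \<noteq> Ord c m) \<Longrightarrow> FS r = 0" using FSs OrdR_Ord by blast
  have sumg: "(\<Sum>m\<in>g. y m) = real (card g) - 1"
  proof -
    have Tg: "T \<subseteq> g" unfolding T_def by blast
    have "(\<Sum>m\<in>g. y m) = (\<Sum>m\<in>T. y m) + (\<Sum>m\<in>g - T. y m)"
      using fg Tg by (simp add: sum.subset_diff)
    also have "(\<Sum>m\<in>T. y m) = real j * (1 - 1 / real j)"
    proof -
      have "(\<Sum>m\<in>T. y m) = (\<Sum>m\<in>T. 1 - 1 / real j)" using yR TR by (intro sum.cong) auto
      then show ?thesis unfolding j_def by simp
    qed
    also have "(\<Sum>m\<in>g - T. y m) = real (card (g - T))"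
    proof -
      have "\<And>m. m \<in> g - T \<Longrightarrow> y m = 1"
      proof -
        fix m assume m: "m \<in> g - T"
        then have "m \<in> M" "m \<notin> A" "m \<notin> R" using gM gA gRT by auto
        then show "y m = 1" using yO by simp
      qed
      then show ?thesis by simp
    qed
    also have "real (card (g - T)) = real (card g) - real j"
    proof -
      have "card T \<le> card g" using fg Tg by (rule card_mono)
      moreover have "card (g - T) = card g - card T" using fg Tg finite_subset by (metis card_Diff_subset)
      ultimately show ?thesis unfolding j_def by (simp add: of_nat_diff)
    qed
    finally show ?thesis using jpos by (simp add: algebra_simps)
  qed
  have slack: "\<And>r. r \<in> rows M C \<Longrightarrow> mu r * act M r y = rhs r * mu r"
  proof -
    fix r assume r: "r \<in> rows M C"
    show "mu r * act M r y = rhs r * mu r"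
    proof (cases r)
      case (Lo m)
      then have mM: "m \<in> M" using r unfolding rows_def by blast
      have mu_eq: "mu r = rho r" unfolding mu_def mu0_def using FS_notOrd Lo by (simp add: pt_def)
      show ?thesis
      proof (cases "y m = 0")
        case True then show ?thesis using Lo mM fM by (simp add: act_Lo)
      next
        case False then show ?thesis using mu_eq Lo by (simp add: rho_def)
      qed
    next
      case (Up m)
      then have mM: "m \<in> M" using r unfolding rows_def by blast
      have mu_eq: "mu r = rho r" unfolding mu_def mu0_def using FS_notOrd Up by (simp add: pt_def)
      show ?thesis
      proof (cases "y m = 1")
        case True then show ?thesis using Up mM fM by (simp add: act_Up)
      next
        case False then show ?thesis using mu_eq Up by (simp add: rho_def)
      qed
    next
      case (Ord c m)
      have mu_eq: "mu r = FS r" unfolding mu_def mu0_def using Ord by (simp add: pt_def rho_def)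
      show ?thesis
      proof (cases "FS r = 0")
        case True then show ?thesis using mu_eq by simp
      next
        case False
        then obtain c' m' where cm: "r = Ord c' m'" "c' \<in> C" "m' \<in> c'" "\<Union>c' \<in> R" "m' \<in> R"
          using FSs OrdR_Ord by blast
        have "act M r y = y (\<Union>c') - y m'" using cm fM RM by (simp add: act_Ord)
        also have "\<dots> = 0" using yR cm by simp
        finally show ?thesis using Ord by simp
      qed
    next
      case (Sm c)
      have mu_eq: "mu r = pt (Sm g) \<delta> r" unfolding mu_def mu0_def using FS_notOrd Sm by (simp add: rho_def)
      show ?thesis
      proof (cases "c = g")
        case False then show ?thesis using mu_eq Sm by (simp add: pt_def)
      next
        case True
        have "act M r y = (\<Sum>m\<in>g. y m) - y p" using Sm True fM gM pM p_def by (simp add: act_Sm)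
        also have "\<dots> = real (card g) - 1" using sumg yA pA by simp
        finally show ?thesis using Sm True by simp
      qed
    qed
  qed
  have objeq: "obj M w y = dobj (rows M C) mu"
  proof -
    have "obj M w y = (\<Sum>x\<in>M. (\<Sum>r\<in>rows M C. mu r * coef r x) * y x)"
      unfolding obj_def w_def dsum_def by simp
    also have "\<dots> = (\<Sum>r\<in>rows M C. mu r * act M r y)"
      unfolding act_def by (simp add: sum_distrib_left sum_distrib_right mult.assoc) (rule sum.swap)
    also have "\<dots> = (\<Sum>r\<in>rows M C. rhs r * mu r)" using slack by (intro sum.cong) auto
    finally show ?thesis unfolding dobj_def .
  qed
  have fRs: "finite R" using RsubM fM finite_subset by blast
  have wR: "\<And>x. x \<in> R \<Longrightarrow> w x = w0 x"
  proof -
    fix x assume xR: "x \<in> R"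
    have "y x \<noteq> 0" "y x \<noteq> 1" using yRn[OF xR] by auto
    then show "w x = w0 x" using wx[OF RM[OF xR]] by (simp add: rho_def)
  qed
  have split: "obj M w y = (\<Sum>x\<in>R. w x * y x) + (\<Sum>x\<in>M - R. w x * y x)"
    unfolding obj_def using fM RsubM by (simp add: sum.subset_diff)
  have p1: "(\<Sum>x\<in>R. w x * y x) = (1 - \<delta>) * (\<Sum>x\<in>R. w0 x)"
  proof -
    have "(\<Sum>x\<in>R. w x * y x) = (\<Sum>x\<in>R. (1 - \<delta>) * w0 x)"
      using wR yR unfolding \<delta>_def by (intro sum.cong) auto
    then show ?thesis by (simp add: sum_distrib_left)
  qed
  have p2: "(\<Sum>x\<in>M - R. w x * y x) \<in> \<int>"
  proof (intro Ints_sum)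
    fix x assume x: "x \<in> M - R"
    have "y x = 0 \<or> y x = 1" using yA yO x by (cases "x \<in> A") auto
    then show "w x * y x \<in> \<int>" using wI x by auto
  qed
  define Sr where "Sr = (\<lambda>r. \<Sum>x\<in>R. coef r x)"
  have p3: "(\<Sum>x\<in>R. w0 x) = 1"
  proof -
    have "(\<Sum>x\<in>R. w0 x) = (\<Sum>x\<in>R. \<Sum>r\<in>rows M C. mu0 r * coef r x)" unfolding w0_def dsum_def by simp
    also have "\<dots> = (\<Sum>r\<in>rows M C. mu0 r * Sr r)"
      unfolding Sr_def by (simp add: sum_distrib_left) (rule sum.swap)
    also have "\<dots> = (\<Sum>r\<in>rows M C. FS r * Sr r) + (\<Sum>r\<in>rows M C. pt (Sm g) \<delta> r * Sr r)"
      unfolding mu0_def by (simp add: distrib_right sum.distrib)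
    also have "(\<Sum>r\<in>rows M C. FS r * Sr r) = 0"
    proof (intro sum.neutral ballI)
      fix r assume "r \<in> rows M C"
      show "FS r * Sr r = 0"
      proof (cases "FS r = 0")
        case True then show ?thesis by simp
      next
        case False
        then obtain c m where cm: "r = Ord c m" "c \<in> C" "m \<in> c" "\<Union>c \<in> R" "m \<in> R"
          using FSs OrdR_Ord by blast
        have "Sr r = (\<Sum>x\<in>R. ind (x = \<Union>c) * 1) - (\<Sum>x\<in>R. ind (x = m) * 1)"
          unfolding Sr_def cm(1) by (simp add: sum_subtractf)
        also have "\<dots> = 0" using cm sum_ind_eq[OF fRs, of "\<Union>c" "\<lambda>_. 1"] sum_ind_eq[OF fRs, of m "\<lambda>_. 1"] by simp
        finally show ?thesis by simp
      qed
    qed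
    also have "(\<Sum>r\<in>rows M C. pt (Sm g) \<delta> r * Sr r) = \<delta> * Sr (Sm g)"
    proof -
      have "(\<Sum>r\<in>rows M C. pt (Sm g) \<delta> r * Sr r) = (\<Sum>r\<in>rows M C. if r = Sm g then \<delta> * Sr (Sm g) else 0)"
        unfolding pt_def by (intro sum.cong) auto
      then show ?thesis using fR Sgrow by (simp add: sum.delta')
    qed
    also have "Sr (Sm g) = real j"
    proof -
      have "Sr (Sm g) = (\<Sum>x\<in>R. ind (x \<in> g)) - (\<Sum>x\<in>R. ind (x = p) * 1)"
        unfolding Sr_def p_def by (simp add: sum_subtractf)
      also have "(\<Sum>x\<in>R. ind (x = p) * 1) = 0"
      proof -
        have "p \<notin> R" using pA RA by blast
        then show ?thesis using sum_ind_eq[OF fRs, of p "\<lambda>_. 1"] by simp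
      qed
      also have "(\<Sum>x\<in>R. ind (x \<in> g)) = real (card (R \<inter> g))"
      proof -
        have "(\<Sum>x\<in>R. ind (x \<in> g)) = (\<Sum>x\<in>R. if x \<in> g then 1 else 0)" by (intro sum.cong) (auto simp: ind_def)
        also have "\<dots> = real (card (R \<inter> g))" using fRs by (simp add: sum.If_cases)
        finally show ?thesis .
      qed
      also have "R \<inter> g = T" using TR gRT unfolding T_def by blast
      finally show ?thesis unfolding j_def by simp
    qed
    finally show ?thesis unfolding \<delta>_def using jpos by simp
  qed
  have nonint: "obj M w y \<notin> \<int>"
  proof
    assume oI: "obj M w y \<in> \<int>"
    have "obj M w y = (1 - \<delta>) + (\<Sum>x\<in>M - R. w x * y x)" using split p1 p3 by simp
    then have "\<delta> = 1 + (\<Sum>x\<in>M - R. w x * y x) - obj M w y" by simp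
    then have "\<delta> \<in> \<int>" using oI p2 by simp
    then obtain k where k: "\<delta> = of_int k" by (auto elim: Ints_cases)
    have "0 < \<delta>" "\<delta> < 1" unfolding \<delta>_def using j2 by auto
    then show False using k by auto
  qed
  show ?thesis using wI yP muD objeq nonint by blast
qed

end

context SL begin

lemma adj_cases: "adj C u v \<Longrightarrow> \<exists>c\<in>C. \<exists>m\<in>c. (u = \<Union>c \<and> v = m) \<or> (u = m \<and> v = \<Union>c)"
  unfolding adj_def by blast

lemma mod_ne_self:
  fixes k d L :: nat
  assumes "k < L" "1 \<le> d" "d < L"
  shows "(k + d) mod L \<noteq> k"
proof (cases "k + d < L")
  case True then show ?thesis using assms by simp
next
  case False
  then have "(k + d) mod L = (k + d - L) mod L" by (simp add: mod_if)
  also have "\<dots> = k + d - L" using assms by simp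
  finally show ?thesis using assms False by simp
qed

lemma cycle_struct:
  assumes "has_cycle M C"
  shows "\<exists>g a b. g \<in> C \<and> a \<in> g \<and> b \<in> g \<and> a \<noteq> b \<and>
     (a, b) \<in> {(u, v). u \<in> M - Anc (\<Union>g) \<and> v \<in> M - Anc (\<Union>g) \<and> adj C u v}\<^sup>*"
proof -
  obtain vs where L3: "length vs \<ge> 3" and dv: "distinct vs" and sv: "set vs \<subseteq> M"
    and ad: "\<forall>i < length vs. adj C (vs ! i) (vs ! ((i + 1) mod length vs))"
    using assms unfolding has_cycle_def by blast
  define L where "L = length vs"
  have L3': "L \<ge> 3" using L3 L_def by simp
  have "Max ((\<lambda>i. card (vs ! i)) ` {..<L}) \<in> (\<lambda>i. card (vs ! i)) ` {..<L}"
  proof (rule Max_in)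
    show "finite ((\<lambda>i. card (vs ! i)) ` {..<L})" by simp
    have "0 \<in> {..<L}" using L3' by simp
    then show "(\<lambda>i. card (vs ! i)) ` {..<L} \<noteq> {}" by blast
  qed
  then obtain k where kL: "k < L" and kmax0: "card (vs ! k) = Max ((\<lambda>i. card (vs ! i)) ` {..<L})" by auto
  have kmax: "\<And>i. i < L \<Longrightarrow> card (vs ! i) \<le> card (vs ! k)" unfolding kmax0 by simp
  define p where "p = vs ! k"
  define k1 where "k1 = (k + 1) mod L"
  define k0 where "k0 = (k + (L - 1)) mod L"
  have k1L: "k1 < L" and k0L: "k0 < L" unfolding k1_def k0_def using L3' by auto
  have k0n: "(k0 + 1) mod L = k"
  proof -
    have "(k0 + 1) mod L = (k + (L - 1) + 1) mod L" unfolding k0_def by (simp add: mod_Suc_eq)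
    also have "k + (L - 1) + 1 = k + L" using L3' by simp
    finally show ?thesis using kL by simp
  qed
  have vM: "\<And>i. i < L \<Longrightarrow> vs ! i \<in> M" using sv unfolding L_def by auto
  have notA: "\<And>i. i < L \<Longrightarrow> i \<noteq> k \<Longrightarrow> vs ! i \<notin> Anc p"
  proof
    fix i assume i: "i < L" "i \<noteq> k" "vs ! i \<in> Anc p"
    have ne: "vs ! i \<noteq> p" unfolding p_def using dv i kL L_def by (simp add: nth_eq_iff_index_eq)
    have "(vs ! i, p) \<in> Ch\<^sup>*" using i(3) unfolding Anc_def by simp
    then have "card p < card (vs ! i)" using Ch_rtrancl_card ne by blast
    then show False using kmax[OF i(1)] p_def by simp
  qed
  obtain g a where gC: "g \<in> C" and ag: "a \<in> g" and pg: "p = \<Union>g" and a_def: "a = vs ! k1"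
  proof -
    have "adj C p (vs ! k1)" using ad kL unfolding p_def k1_def L_def by simp
    then obtain c m where cC: "c \<in> C" and mc: "m \<in> c" and cs: "(p = \<Union>c \<and> vs ! k1 = m) \<or> (p = m \<and> vs ! k1 = \<Union>c)"
      using adj_cases by meson
    have "p = \<Union>c \<and> vs ! k1 = m"
    proof (rule disjE[OF cs])
      assume "p = \<Union>c \<and> vs ! k1 = m" then show ?thesis .
    next
      assume h: "p = m \<and> vs ! k1 = \<Union>c"
      then have "card p < card (vs ! k1)" using C_card[OF cC mc] by simp
      then show ?thesis using kmax[OF k1L] p_def by simp
    qed
    then have h1: "p = \<Union>c" and h2: "vs ! k1 = m" by simp_all
    show ?thesis by (rule that[OF cC, of m]) (use mc h1 h2 in simp_all)
  qed
  obtain b where bg: "b \<in> g" and b_def: "b = vs ! k0"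
  proof -
    have "adj C (vs ! k0) (vs ! ((k0 + 1) mod L))" using ad k0L unfolding L_def by simp
    then have "adj C (vs ! k0) p" using k0n p_def by simp
    then obtain c m where cC: "c \<in> C" and mc: "m \<in> c" and cs: "(vs ! k0 = \<Union>c \<and> p = m) \<or> (vs ! k0 = m \<and> p = \<Union>c)"
      using adj_cases by meson
    have "vs ! k0 = m \<and> p = \<Union>c"
    proof (rule disjE[OF cs])
      assume "vs ! k0 = m \<and> p = \<Union>c" then show ?thesis .
    next
      assume h: "vs ! k0 = \<Union>c \<and> p = m"
      then have "card p < card (vs ! k0)" using C_card[OF cC mc] by simp
      then show ?thesis using kmax[OF k0L] p_def by simp
    qed
    then have h1: "vs ! k0 = m" and h2: "p = \<Union>c" by simp_all
    have "\<Union>c = \<Union>g" by (rule trans[OF sym[OF h2] pg])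
    then have "c = g" using C_inj[OF cC gC] by blast
    then have "m \<in> g" using mc by (rule subst)
    then show ?thesis using that[of m] h1 by blast
  qed
  have k10: "k1 \<noteq> k0"
  proof
    assume eq: "k1 = k0"
    have nat_eq: "k + (L - 1) = (k + 1) + (L - 2)" using L3' by simp
    have e1: "k0 = ((k + 1) mod L + (L - 2)) mod L"
      unfolding k0_def nat_eq by (simp add: mod_add_left_eq)
    have "((k + 1) mod L + (L - 2)) mod L \<noteq> (k + 1) mod L"
      using mod_ne_self[of "(k + 1) mod L" L "L - 2"] L3' by simp
    then show False using eq e1 unfolding k1_def by simp
  qed
  have ab: "a \<noteq> b" unfolding a_def b_def using dv k1L k0L k10 L_def by (simp add: nth_eq_iff_index_eq)
  define E where "E = {(u, v). u \<in> M - Anc (\<Union>g) \<and> v \<in> M - Anc (\<Union>g) \<and> adj C u v}"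
  have path: "\<And>d. 1 \<le> d \<Longrightarrow> d \<le> L - 1 \<Longrightarrow> (a, vs ! ((k + d) mod L)) \<in> E\<^sup>*"
  proof -
    fix d :: nat
    show "1 \<le> d \<Longrightarrow> d \<le> L - 1 \<Longrightarrow> (a, vs ! ((k + d) mod L)) \<in> E\<^sup>*"
    proof (induction d)
      case 0 then show ?case by simp
    next
      case (Suc d)
      show ?case
      proof (cases "d = 0")
        case True then show ?thesis unfolding a_def k1_def by simp
      next
        case False
        then have IH: "(a, vs ! ((k + d) mod L)) \<in> E\<^sup>*" using Suc by simp
        define i where "i = (k + d) mod L"
        have iL: "i < L" unfolding i_def using L3' by simp
        have dL: "d < L" using Suc.prems L3' by linarith
        have ik: "i \<noteq> k" unfolding i_def using mod_ne_self[OF kL _ dL] False by simp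
        have nxt: "(i + 1) mod L = (k + Suc d) mod L" unfolding i_def by (simp add: mod_Suc_eq)
        have sdL: "Suc d < L" using Suc.prems L3' by linarith
        have ik': "(k + Suc d) mod L \<noteq> k" using mod_ne_self[OF kL _ sdL] by simp
        have nL: "(k + Suc d) mod L < L" using L3' by simp
        have "adj C (vs ! i) (vs ! ((i + 1) mod L))" using ad iL unfolding L_def by simp
        then have "(vs ! i, vs ! ((k + Suc d) mod L)) \<in> E"
          unfolding E_def using nxt vM[OF iL] vM[OF nL] notA[OF iL ik] notA[OF nL ik'] pg by simp
        then show ?thesis using IH unfolding i_def by simp
      qed
    qed
  qed
  have "(a, vs ! ((k + (L - 1)) mod L)) \<in> E\<^sup>*" using path[of "L - 1"] L3' by simp
  then have "(a, b) \<in> E\<^sup>*" unfolding b_def k0_def .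
  then show ?thesis unfolding E_def using gC ag bg ab by blast
qed

lemma cyclic_bad:
  assumes "has_cycle M C"
  shows "\<not> integral_polytope M (PL M C)" "\<not> TDI M (rows M C) coef rhs"
proof -
  obtain g a b where g: "g \<in> C" "a \<in> g" "b \<in> g" "a \<noteq> b"
    "(a, b) \<in> {(u, v). u \<in> M - Anc (\<Union>g) \<and> v \<in> M - Anc (\<Union>g) \<and> adj C u v}\<^sup>*"
    using cycle_struct[OF assms] by blast
  obtain w y \<mu> where wI: "\<forall>m\<in>M. w m \<in> \<int>" and yP: "y \<in> PLs M C" and muD: "\<mu> \<in> Dual M C w"
    and eq: "obj M w y = dobj (rows M C) \<mu>" and ni: "obj M w y \<notin> \<int>"
    using cert[OF g] by blast
  have opt: "\<forall>y'\<in>PLs M C. obj M w y' \<le> obj M w y"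
    using weak[OF sys_MC _ muD] eq by simp
  show "\<not> integral_polytope M (PL M C)"
  proof
    assume ip: "integral_polytope M (PL M C)"
    obtain v where v: "vertex (PL M C) v" "obj M w v = obj M w y" using vertex_exists[OF yP opt] by blast
    have "\<forall>m\<in>M. v m \<in> \<int>" using ip v(1) unfolding integral_polytope_def by blast
    then have "obj M w v \<in> \<int>" unfolding obj_def using wI by (intro Ints_sum Ints_mult) auto
    then show False using v(2) ni by simp
  qed
  show "\<not> TDI M (rows M C) coef rhs"
  proof
    assume tdi: "TDI M (rows M C) coef rhs"
    have Peq: "{y. (\<forall>m. m \<notin> M \<longrightarrow> y m = 0) \<and> (\<forall>r\<in>rows M C. (\<Sum>m\<in>M. coef r m * y m) \<le> rhs r)} = PLs M C"
      unfolding PLs_def act_def by simp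
    have Deq: "{lam. (\<forall>r. r \<notin> rows M C \<longrightarrow> lam r = 0) \<and> (\<forall>r\<in>rows M C. 0 \<le> lam r) \<and>
       (\<forall>m\<in>M. (\<Sum>r\<in>rows M C. lam r * coef r m) = w m)} = Dual M C w"
      unfolding Dual_def dsum_def by simp
    have "(\<exists>y\<in>PLs M C. \<forall>y'\<in>PLs M C. obj M w y' \<le> obj M w y) \<longrightarrow>
        (\<exists>lam\<in>Dual M C w. (\<forall>r\<in>rows M C. lam r \<in> \<int>) \<and> (\<forall>\<mu>\<in>Dual M C w. dobj (rows M C) lam \<le> dobj (rows M C) \<mu>))"
    proof -
      have t0: "(\<forall>m\<in>M. w m \<in> \<int>) \<longrightarrow> (let P = {y. (\<forall>m. m \<notin> M \<longrightarrow> y m = 0) \<and> (\<forall>r\<in>rows M C. (\<Sum>m\<in>M. coef r m * y m) \<le> rhs r)};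
           D = {lam. (\<forall>r. r \<notin> rows M C \<longrightarrow> lam r = 0) \<and> (\<forall>r\<in>rows M C. 0 \<le> lam r) \<and>
                    (\<forall>m\<in>M. (\<Sum>r\<in>rows M C. lam r * coef r m) = w m)}
       in (\<exists>y\<in>P. \<forall>y'\<in>P. (\<Sum>m\<in>M. w m * y' m) \<le> (\<Sum>m\<in>M. w m * y m)) \<longrightarrow>
          (\<exists>lam\<in>D. (\<forall>r\<in>rows M C. lam r \<in> \<int>) \<and>
                  (\<forall>\<mu>\<in>D. (\<Sum>r\<in>rows M C. rhs r * lam r) \<le> (\<Sum>r\<in>rows M C. rhs r * \<mu> r))))"
        using tdi unfolding TDI_def by (rule spec)
      note t1 = mp[OF t0 wI]
      show ?thesis using t1 unfolding Let_def Peq Deq obj_def dobj_def .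
    qed
    then obtain lam where lam: "lam \<in> Dual M C w" "\<forall>r\<in>rows M C. lam r \<in> \<int>"
      "\<forall>\<mu>\<in>Dual M C w. dobj (rows M C) lam \<le> dobj (rows M C) \<mu>"
      using yP opt by blast
    have "dobj (rows M C) lam \<le> obj M w y" using lam(3) muD eq by simp
    moreover have "obj M w y \<le> dobj (rows M C) lam" using weak[OF sys_MC yP lam(1)] .
    ultimately have "dobj (rows M C) lam = obj M w y" by simp
    moreover have "dobj (rows M C) lam \<in> \<int>" unfolding dobj_def using lam(2) rhs_Int
      by (intro Ints_sum Ints_mult) auto
    ultimately show False using ni by simp
  qed
qed

lemma main_SL:
  "(integral_polytope M (PL M C) \<longleftrightarrow> acyclic_graph M C) \<and>
   (acyclic_graph M C \<longleftrightarrow> TDI M (rows M C) coef rhs)"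
proof (cases "has_cycle M C")
  case True
  then show ?thesis using cyclic_bad unfolding acyclic_graph_def by blast
next
  case False
  have QM: "Q M C" using Q_acyclic[OF sys_MC False] .
  have "integral_polytope M (PL M C)" unfolding integral_polytope_def using vertex_integral[OF QM] by blast
  moreover have "TDI M (rows M C) coef rhs" using TDI_from_Q[OF QM] .
  ultimately show ?thesis using False unfolding acyclic_graph_def by blast
qed

end

lemma ex1_eq: "\<exists>!x. P x \<Longrightarrow> P a \<Longrightarrow> P b \<Longrightarrow> a = b"
  by blast

lemma simple_SL:
  assumes sl: "simple_linearization n M C"
  shows "SL M C"
proof -
  have lin: "linearization n M C" and uniq: "\<forall>m\<in>proper_monomials n M. \<exists>!c. c \<in> C \<and> \<Union>c = m"
    and cardeq: "card C = card (proper_monomials n M)"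
    using sl unfolding simple_linearization_def by auto
  have Msub: "\<forall>m\<in>M. m \<noteq> {} \<and> m \<subseteq> {1..n}" and sing: "\<forall>i\<in>{1..n}. {i} \<in> M"
    and Cprop: "\<forall>c\<in>C. c \<subseteq> M \<and> \<Union>c \<in> M"
    and cons: "\<forall>m\<in>M - {{i} | i. i \<in> {1..n}}. \<exists>c\<in>C. \<Union>c = m \<and> (\<forall>m'\<in>c. card m' < card m)"
    using lin unfolding linearization_def by auto
  have finM: "finite M"
  proof -
    have "M \<subseteq> Pow {1..n}" using Msub by blast
    then show ?thesis using finite_subset by blast
  qed
  have finC: "finite C"
  proof -
    have "C \<subseteq> Pow M" using Cprop by blast
    then show ?thesis using finM finite_subset by blast
  qed
  define P where "P = proper_monomials n M"
  have Pdef: "P = M - {{i} | i. i \<in> {1..n}}" unfolding P_def proper_monomials_def by simp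
  define f where "f = (\<lambda>m. THE c. c \<in> C \<and> \<Union>c = m)"
  have fP: "\<And>m. m \<in> P \<Longrightarrow> f m \<in> C \<and> \<Union>(f m) = m"
  proof -
    fix m assume "m \<in> P"
    then have "\<exists>!c. c \<in> C \<and> \<Union>c = m" using uniq P_def by simp
    then show "f m \<in> C \<and> \<Union>(f m) = m" unfolding f_def by (rule theI')
  qed
  have injf: "inj_on f P"
  proof (rule inj_onI)
    fix x z assume "x \<in> P" "z \<in> P" "f x = f z"
    then show "x = z" using fP by metis
  qed
  have imgC: "f ` P \<subseteq> C" using fP by blast
  have finP: "finite P" using finM Pdef by simp
  have "card (f ` P) = card C" using card_image[OF injf] cardeq P_def by simp
  then have imgeq: "f ` P = C" using card_subset_eq[OF finC imgC] by simp
  have CP: "\<And>c. c \<in> C \<Longrightarrow> \<Union>c \<in> P"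
  proof -
    fix c assume "c \<in> C"
    then obtain m where "m \<in> P" "c = f m" using imgeq by blast
    then show "\<Union>c \<in> P" using fP by simp
  qed
  show ?thesis
  proof
    show "finite M" by (rule finM)
    show "finite C" by (rule finC)
    show "\<And>c. c \<in> C \<Longrightarrow> c \<subseteq> M" using Cprop by simp
    show "\<And>c. c \<in> C \<Longrightarrow> \<Union>c \<in> M" using Cprop by simp
    show "\<And>c m. c \<in> C \<Longrightarrow> m \<in> c \<Longrightarrow> card m < card (\<Union>c)"
    proof -
      fix c m assume cC: "c \<in> C" and mc: "m \<in> c"
      have uP: "\<Union>c \<in> P" using CP[OF cC] .
      then have uM: "\<Union>c \<in> M - {{i} | i. i \<in> {1..n}}" using Pdef by simp
      obtain c' where c'C: "c' \<in> C" and c'p: "\<Union>c' = \<Union>c \<and> (\<forall>m'\<in>c'. card m' < card (\<Union>c))"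
        by (rule bexE[OF bspec[OF cons uM]])
      have ex: "\<exists>!d. d \<in> C \<and> \<Union>d = \<Union>c" using bspec[OF uniq] uP P_def by simp
      have "c' = c" using ex1_eq[OF ex] c'C c'p cC by simp
      then show "card m < card (\<Union>c)" using c'p mc by simp
    qed
    show "\<And>c c'. c \<in> C \<Longrightarrow> c' \<in> C \<Longrightarrow> \<Union>c = \<Union>c' \<Longrightarrow> c = c'"
    proof -
      fix c c' assume cC: "c \<in> C" and c'C: "c' \<in> C" and eq: "\<Union>c = \<Union>c'"
      have uP: "\<Union>c \<in> P" using CP[OF cC] .
      have ex: "\<exists>!d. d \<in> C \<and> \<Union>d = \<Union>c" using bspec[OF uniq] uP P_def by simp
      show "c = c'" using ex1_eq[OF ex] cC c'C eq by simp
    qed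
    show "\<And>m. m \<in> M \<Longrightarrow> m \<noteq> {} \<and> finite m"
    proof -
      fix m assume "m \<in> M"
      then have "m \<noteq> {}" "m \<subseteq> {1..n}" using Msub by auto
      then show "m \<noteq> {} \<and> finite m" using finite_subset by blast
    qed
    show "\<And>m i. m \<in> M \<Longrightarrow> i \<in> m \<Longrightarrow> {i} \<in> M"
    proof -
      fix m i assume "m \<in> M" "i \<in> m"
      then have "i \<in> {1..n}" using Msub by (meson subsetD)
      then show "{i} \<in> M" using sing by simp
    qed
    show "\<And>m. m \<in> M \<Longrightarrow> (\<exists>i. m = {i}) \<or> (\<exists>c\<in>C. \<Union>c = m)"
    proof -
      fix m assume mM: "m \<in> M"
      show "(\<exists>i. m = {i}) \<or> (\<exists>c\<in>C. \<Union>c = m)"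
      proof (cases "m \<in> {{i} | i. i \<in> {1..n}}")
        case True
        then obtain i where "m = {i}" by (rule CollectE) (metis)
        then show ?thesis by simp
      next
        case False then have "m \<in> M - {{i} | i. i \<in> {1..n}}" using mM by blast
        then obtain c where "c \<in> C" "\<Union>c = m \<and> (\<forall>m'\<in>c. card m' < card m)"
          by (rule bexE[OF bspec[OF cons]])
        then show ?thesis by (intro disjI2 bexI[of _ c]) simp_all
      qed
    qed
  qed
qed

theorem corollary3p7:
  fixes n :: nat and M :: "nat set set" and C :: "nat set set set"
  assumes "simple_linearization n M C"
  shows "(integral_polytope M (PL M C) \<longleftrightarrow> acyclic_graph M C) \<and>
         (acyclic_graph M C \<longleftrightarrow> TDI M (rows M C) coef rhs)"
proof -
  interpret SL M C using simple_SL[OF assms] .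
  show ?thesis by (rule main_SL)
qed

end
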